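(* For every WHB-algebra $\mathbf A$, the congruence lattice $\mathrm{Con}_{\mathcal{WHB}}(\mathbf A)$ of $\mathbf A$ is isomorphic to the congruence lattice $\mathrm{Con}_{\mathcal{TBA}}(T(\mathbf A))$ of the tense algebra $T(\mathbf A)$.
   Context: A WHB-algebra is an algebra $(A,\wedge,\vee,\to,\leftarrow,0,1)$ such that $(A,\wedge,\vee,0,1)$ is a bounded distributive lattice and for all $a,b,c\in A$: $a\to a=1$; $a\to(b\wedge c)=(a\to b)\wedge(a\to c)$; $(a\vee b)\to c=(a\to c)\wedge(b\to c)$; $(a\to b)\wedge(b\to c)\le a\to c$; $a\leftarrow a=0$; $(a\vee b)\leftarrow c=(a\leftarrow c)\vee(b\leftarrow c)$; $a\leftarrow(b\wedge c)=(a\leftarrow b)\vee(a\leftarrow c)$; $a\leftarrow c\le(a\leftarrow b)\vee(b\leftarrow c)$; $a\wedge((a\to b)\leftarrow 0)\le b$; $a\le b\vee(1\to(a\leftarrow b))$. A tense algebra is $(\mathbf B,G,H)$ with $\mathbf B$ a Boolean algebra and unary $G,H$ such that, with $P(x)=\neg H(\neg x)$, $F(x)=\neg G(\neg x)$: $P(x)\le y\iff x\le G(y)$ and $F(x)\le y\iff x\le H(y)$. For a WHB-algebra $\mathbf A$: $X(\mathbf A)$ is its set of prime filters, $\sigma_{\mathbf A}(a)=\{P\colon a\in P\}$, $\tau_{\mathbf A}$ the topology with subbase $\{\sigma_{\mathbf A}(a)\}\cup\{X(\mathbf A)\setminus\sigma_{\mathbf A}(a)\}$; $(P,Q)\in R_{\mathbf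 A}$ iff for all $a,b$ ($a\to b\in P$, $a\in Q$ imply $b\in Q$); $(P,Q)\in S_{\mathbf A}$ iff for all $a,b$ ($a\in Q$, $b\notin Q$ imply $a\leftarrow b\in P$). $T(\mathbf A)$ is the Boolean algebra of $\tau_{\mathbf A}$-clopen subsets of $X(\mathbf A)$ with $G_{\mathbf A}(U)=\{P\colon R_{\mathbf A}(P)\subseteq U\}$ and $H_{\mathbf A}(U)=\{P\colon S_{\mathbf A}(P)\subseteq U\}$, where $\mathcal R(P)=\{Q\colon(P,Q)\in\mathcal R\}$. *)

theory Defs
  imports "HOL-Analysis.Analysis"
begin

section \<open>WHB-algebras (carrier = the whole type 'a)\<close>

record 'a whb =
  wmeet :: "'a \<Rightarrow> 'a \<Rightarrow> 'a"
  wjoin :: "'a \<Rightarrow> 'a \<Rightarrow> 'a"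
  wimp  :: "'a \<Rightarrow> 'a \<Rightarrow> 'a"
  wcoimp :: "'a \<Rightarrow> 'a \<Rightarrow> 'a"
  wzero :: 'a
  wone  :: 'a

definition wle :: "'a whb \<Rightarrow> 'a \<Rightarrow> 'a \<Rightarrow> bool" where
  "wle A x y \<longleftrightarrow> wmeet A x y = x"

definition bdl :: "'a whb \<Rightarrow> bool" where
  "bdl A \<longleftrightarrow>
    (\<forall>x y z. wmeet A x (wmeet A y z) = wmeet A (wmeet A x y) z) \<and>
    (\<forall>x y z. wjoin A x (wjoin A y z) = wjoin A (wjoin A x y) z) \<and>
    (\<forall>x y. wmeet A x y = wmeet A y x) \<and>
    (\<forall>x y. wjoin A x y = wjoin A y x) \<and>
    (\<forall>x y. wmeet A x (wjoin A x y) = x) \<and>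
    (\<forall>x y. wjoin A x (wmeet A x y) = x) \<and>
    (\<forall>x y z. wmeet A x (wjoin A y z) = wjoin A (wmeet A x y) (wmeet A x z)) \<and>
    (\<forall>x. wmeet A (wzero A) x = wzero A) \<and>
    (\<forall>x. wmeet A (wone A) x = x)"

definition WHB_algebra :: "'a whb \<Rightarrow> bool" where
  "WHB_algebra A \<longleftrightarrow> bdl A \<and>
    (\<forall>a. wimp A a a = wone A) \<and>
    (\<forall>a b c. wimp A a (wmeet A b c) = wmeet A (wimp A a b) (wimp A a c)) \<and>
    (\<forall>a b c. wimp A (wjoin A a b) c = wmeet A (wimp A a c) (wimp A b c)) \<and>
    (\<forall>a b c. wle A (wmeet A (wimp A a b) (wimp A b c)) (wimp A a c)) \<and>
    (\<forall>a. wcoimp A a a = wzero A) \<and>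
    (\<forall>a b c. wcoimp A (wjoin A a b) c = wjoin A (wcoimp A a c) (wcoimp A b c)) \<and>
    (\<forall>a b c. wcoimp A a (wmeet A b c) = wjoin A (wcoimp A a b) (wcoimp A a c)) \<and>
    (\<forall>a b c. wle A (wcoimp A a c) (wjoin A (wcoimp A a b) (wcoimp A b c))) \<and>
    (\<forall>a b. wle A (wmeet A a (wcoimp A (wimp A a b) (wzero A))) b) \<and>
    (\<forall>a b. wle A a (wjoin A b (wimp A (wone A) (wcoimp A a b))))"

definition prime_filter :: "'a whb \<Rightarrow> 'a set \<Rightarrow> bool" where
  "prime_filter A P \<longleftrightarrow>
     wone A \<in> P \<and> wzero A \<notin> P \<and>
     (\<forall>a b. a \<in> P \<longrightarrow> wle A a b \<longrightarrow> b \<in> P) \<and>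
     (\<forall>a b. a \<in> P \<longrightarrow> b \<in> P \<longrightarrow> wmeet A a b \<in> P) \<and>
     (\<forall>a b. wjoin A a b \<in> P \<longrightarrow> a \<in> P \<or> b \<in> P)"

definition Xp :: "'a whb \<Rightarrow> 'a set set" where
  "Xp A = {P. prime_filter A P}"

definition sigmaA :: "'a whb \<Rightarrow> 'a \<Rightarrow> 'a set set" where
  "sigmaA A a = {P \<in> Xp A. a \<in> P}"

definition tauA :: "'a whb \<Rightarrow> 'a set topology" where
  "tauA A = topology_generated_by
     (range (sigmaA A) \<union> (\<lambda>a. Xp A - sigmaA A a) ` UNIV)"

definition RA :: "'a whb \<Rightarrow> ('a set \<times> 'a set) set" where
  "RA A = {(P, Q). P \<in> Xp A \<and> Q \<in> Xp A \<and>
     (\<forall>a b. wimp A a b \<in> P \<longrightarrow> a \<in> Q \<longrightarrow> b \<in> Q)}"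

definition SA :: "'a whb \<Rightarrow> ('a set \<times> 'a set) set" where
  "SA A = {(P, Q). P \<in> Xp A \<and> Q \<in> Xp A \<and>
     (\<forall>a b. a \<in> Q \<longrightarrow> b \<notin> Q \<longrightarrow> wcoimp A a b \<in> P)}"

record 'b tba =
  tcar  :: "'b set"
  tmeet :: "'b \<Rightarrow> 'b \<Rightarrow> 'b"
  tjoin :: "'b \<Rightarrow> 'b \<Rightarrow> 'b"
  tneg  :: "'b \<Rightarrow> 'b"
  tzero :: 'b
  tone  :: 'b
  tG    :: "'b \<Rightarrow> 'b"
  tH    :: "'b \<Rightarrow> 'b"

definition TA :: "'a whb \<Rightarrow> 'a set set tba" where
  "TA A = \<lparr> tcar = {U. openin (tauA A) U \<and> closedin (tauA A) U},
            tmeet = (\<inter>), tjoin = (\<union>), tneg = (\<lambda>U. Xp A - U),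
            tzero = {}, tone = Xp A,
            tG = (\<lambda>U. {P \<in> Xp A. RA A `` {P} \<subseteq> U}),
            tH = (\<lambda>U. {P \<in> Xp A. SA A `` {P} \<subseteq> U}) \<rparr>"

definition Con_WHB :: "'a whb \<Rightarrow> ('a \<times> 'a) set set" where
  "Con_WHB A = {\<theta>. equiv UNIV \<theta> \<and>
     (\<forall>a b c d. (a, b) \<in> \<theta> \<longrightarrow> (c, d) \<in> \<theta> \<longrightarrow>
        (wmeet A a c, wmeet A b d) \<in> \<theta> \<and> (wjoin A a c, wjoin A b d) \<in> \<theta> \<and>
        (wimp A a c, wimp A b d) \<in> \<theta> \<and> (wcoimp A a c, wcoimp A b d) \<in> \<theta>)}"

definition Con_TBA :: "'b tba \<Rightarrow> ('b \<times> 'b) set set" where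
  "Con_TBA B = {\<theta>. equiv (tcar B) \<theta> \<and>
     (\<forall>a b c d. (a, b) \<in> \<theta> \<longrightarrow> (c, d) \<in> \<theta> \<longrightarrow>
        (tmeet B a c, tmeet B b d) \<in> \<theta> \<and> (tjoin B a c, tjoin B b d) \<in> \<theta>) \<and>
     (\<forall>a b. (a, b) \<in> \<theta> \<longrightarrow>
        (tneg B a, tneg B b) \<in> \<theta> \<and> (tG B a, tG B b) \<in> \<theta> \<and> (tH B a, tH B b) \<in> \<theta>)}"

definition con_join :: "('c \<times> 'c) set set \<Rightarrow> ('c \<times> 'c) set \<Rightarrow> ('c \<times> 'c) set \<Rightarrow> ('c \<times> 'c) set" where
  "con_join L \<theta> \<psi> = \<Inter>{\<phi> \<in> L. \<theta> \<union> \<psi> \<subseteq> \<phi>}"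

definition lattice_iso ::
  "('c \<times> 'c) set set \<Rightarrow> ('d \<times> 'd) set set \<Rightarrow> (('c \<times> 'c) set \<Rightarrow> ('d \<times> 'd) set) \<Rightarrow> bool" where
  "lattice_iso L M f \<longleftrightarrow> bij_betw f L M \<and>
     (\<forall>\<theta>\<in>L. \<forall>\<psi>\<in>L. f (\<theta> \<inter> \<psi>) = f \<theta> \<inter> f \<psi> \<and>
                    f (con_join L \<theta> \<psi>) = con_join M (f \<theta>) (f \<psi>))"

end

theory Submission
  imports Defs
begin

locale W =
  fixes A :: "'a whb"
  assumes WA: "WHB_algebra A"
begin

abbreviation m where "m \<equiv> wmeet A"
abbreviation j where "j \<equiv> wjoin A"
abbreviation imp where "imp \<equiv> wimp A"
abbreviation cimp where "cimp \<equiv> wcoimp A"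
abbreviation z where "z \<equiv> wzero A"
abbreviation on where "on \<equiv> wone A"
abbreviation le where "le \<equiv> wle A"

lemma bdl: "bdl A" using WA unfolding WHB_algebra_def by blast

lemma m_assoc: "m x (m y w) = m (m x y) w" using bdl unfolding bdl_def by blast
lemma j_assoc: "j x (j y w) = j (j x y) w" using bdl unfolding bdl_def by blast
lemma m_comm: "m x y = m y x" using bdl unfolding bdl_def by blast
lemma j_comm: "j x y = j y x" using bdl unfolding bdl_def by blast
lemma m_abs: "m x (j x y) = x" using bdl unfolding bdl_def by blast
lemma j_abs: "j x (m x y) = x" using bdl unfolding bdl_def by blast
lemma distr: "m x (j y w) = j (m x y) (m x w)" using bdl unfolding bdl_def by blast
lemma m_z: "m z x = z" using bdl unfolding bdl_def by blast
lemma m_o: "m on x = x" using bdl unfolding bdl_def by blast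

lemma m_idem: "m x x = x" by (metis j_abs m_abs)
lemma j_idem: "j x x = x" by (metis j_abs m_abs)
lemma le_iff_j: "le x y \<longleftrightarrow> j x y = y"
  unfolding wle_def by (metis j_abs m_abs m_comm j_comm)

lemma le_lat: "class.distrib_lattice m le (\<lambda>x y. le x y \<and> x \<noteq> y) j"
proof -
  have dual_distr: "j x (m y w) = m (j x y) (j x w)" for x y w
    by (metis distr j_abs m_abs m_assoc m_comm j_comm j_assoc)
  show ?thesis
    apply unfold_locales
    unfolding wle_def
    apply (auto simp: m_idem)
    apply (metis m_comm)
    apply (metis m_assoc)
    apply (metis m_comm)
    apply (metis m_comm m_assoc m_idem)
    apply (metis m_assoc m_idem)
    apply (metis m_assoc)
    apply (metis m_abs)
    apply (metis m_abs j_comm)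
    apply (metis le_iff_j wle_def j_assoc)
    apply (rule dual_distr)
    done
qed

sublocale L: distrib_lattice m le "\<lambda>x y. le x y \<and> x \<noteq> y" j by (rule le_lat)

lemma z_le: "le z x" unfolding wle_def by (rule m_z)
lemma le_o: "le x on" unfolding wle_def by (metis m_o m_comm)

lemma ax: "(\<forall>a. imp a a = on) \<and>
    (\<forall>a b c. imp a (m b c) = m (imp a b) (imp a c)) \<and>
    (\<forall>a b c. imp (j a b) c = m (imp a c) (imp b c)) \<and>
    (\<forall>a b c. le (m (imp a b) (imp b c)) (imp a c)) \<and>
    (\<forall>a. cimp a a = z) \<and>
    (\<forall>a b c. cimp (j a b) c = j (cimp a c) (cimp b c)) \<and>
    (\<forall>a b c. cimp a (m b c) = j (cimp a b) (cimp a c)) \<and>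
    (\<forall>a b c. le (cimp a c) (j (cimp a b) (cimp b c)))"
  using WA unfolding WHB_algebra_def by (elim conjE) (intro conjI; assumption)

lemma imp_refl: "imp a a = on" using ax by blast
lemma imp_meet: "imp a (m b c) = m (imp a b) (imp a c)" using ax by blast
lemma imp_join: "imp (j a b) c = m (imp a c) (imp b c)" using ax by blast
lemma imp_trans: "le (m (imp a b) (imp b c)) (imp a c)" using ax by blast
lemma cimp_refl: "cimp a a = z" using ax by blast
lemma cimp_join: "cimp (j a b) c = j (cimp a c) (cimp b c)" using ax by blast
lemma cimp_meet: "cimp a (m b c) = j (cimp a b) (cimp a c)" using ax by blast
lemma cimp_trans: "le (cimp a c) (j (cimp a b) (cimp b c))" using ax by blast

lemma imp_mono2: "le x y \<Longrightarrow> le (imp a x) (imp a y)"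
  by (metis L.inf_absorb1 L.inf_le2 imp_meet L.inf_commute)
lemma imp_anti1: "le x y \<Longrightarrow> le (imp y c) (imp x c)"
  by (metis L.sup_absorb2 L.inf_le1 imp_join)
lemma imp_le_one: "le x y \<Longrightarrow> imp x y = on"
  by (metis L.inf_absorb1 imp_meet imp_refl m_o)
lemma cimp_mono1: "le x y \<Longrightarrow> le (cimp x c) (cimp y c)"
  by (metis L.sup_absorb2 L.sup_ge1 cimp_join)
lemma cimp_anti2: "le x y \<Longrightarrow> le (cimp a y) (cimp a x)"
  by (metis L.inf_absorb1 L.sup_ge2 cimp_meet)
lemma cimp_le_zero: "le x y \<Longrightarrow> cimp x y = z"
  by (metis L.inf_absorb1 L.sup_absorb2 cimp_meet cimp_refl z_le)

lemma pf: "P \<in> Xp A \<Longrightarrow> on \<in> P \<and> z \<notin> P \<and>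
     (\<forall>a b. a \<in> P \<longrightarrow> le a b \<longrightarrow> b \<in> P) \<and>
     (\<forall>a b. a \<in> P \<longrightarrow> b \<in> P \<longrightarrow> m a b \<in> P) \<and>
     (\<forall>a b. j a b \<in> P \<longrightarrow> a \<in> P \<or> b \<in> P)"
  unfolding Xp_def prime_filter_def by blast

lemma pf_one: "P \<in> Xp A \<Longrightarrow> on \<in> P" using pf by blast
lemma pf_zero: "P \<in> Xp A \<Longrightarrow> z \<notin> P" using pf by blast
lemma pf_up: "P \<in> Xp A \<Longrightarrow> a \<in> P \<Longrightarrow> le a b \<Longrightarrow> b \<in> P" using pf by blast
lemma pf_meet: "P \<in> Xp A \<Longrightarrow> m a b \<in> P \<longleftrightarrow> a \<in> P \<and> b \<in> P"
  using pf[of P] L.inf_le1 L.inf_le2 by blast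
lemma pf_join: "P \<in> Xp A \<Longrightarrow> j a b \<in> P \<longleftrightarrow> a \<in> P \<or> b \<in> P"
  using pf[of P] L.sup_ge1 L.sup_ge2 by blast

definition filt where
  "filt Q \<longleftrightarrow> on \<in> Q \<and> (\<forall>a b. a \<in> Q \<longrightarrow> le a b \<longrightarrow> b \<in> Q) \<and> (\<forall>a b. a \<in> Q \<longrightarrow> b \<in> Q \<longrightarrow> m a b \<in> Q)"
definition clos where
  "clos Rel Q \<longleftrightarrow> (\<forall>u v. u \<in> Q \<longrightarrow> Rel u v \<longrightarrow> v \<in> Q)"
definition fam where
  "fam F0 E Rel = {Q. filt Q \<and> F0 \<subseteq> Q \<and> Q \<inter> E = {} \<and> clos Rel Q}"

lemma zorn_fam:
  assumes "F0 \<in> fam F0 E Rel"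
  shows "\<exists>Q\<in>fam F0 E Rel. \<forall>Q'\<in>fam F0 E Rel. Q \<subseteq> Q' \<longrightarrow> Q' = Q"
proof (rule Zorn_Lemma2, intro ballI)
  fix C assume C: "C \<in> chains (fam F0 E Rel)"
  show "\<exists>U\<in>fam F0 E Rel. \<forall>X\<in>C. X \<subseteq> U"
  proof (cases "C = {}")
    case True then show ?thesis using assms by blast
  next
    case False
    have CF: "C \<subseteq> fam F0 E Rel" using C chainsD2 by blast
    have "\<Union>C \<in> fam F0 E Rel"
      unfolding fam_def mem_Collect_eq filt_def clos_def
    proof (intro conjI allI impI)
      obtain X where X: "X \<in> C" using False by blast
      then show "on \<in> \<Union>C" using CF unfolding fam_def filt_def by blast
      show "F0 \<subseteq> \<Union>C" using X CF unfolding fam_def by blast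
      show "\<Union>C \<inter> E = {}" using CF unfolding fam_def by blast
    next
      fix a b assume "a \<in> \<Union>C" "le a b" then show "b \<in> \<Union>C"
        using CF unfolding fam_def filt_def by blast
    next
      fix a b assume "a \<in> \<Union>C" "Rel a b" then show "b \<in> \<Union>C"
        using CF unfolding fam_def clos_def by blast
    next
      fix a b assume "a \<in> \<Union>C" "b \<in> \<Union>C"
      then obtain X Y where XY: "X \<in> C" "Y \<in> C" "a \<in> X" "b \<in> Y" by blast
      then have "X \<subseteq> Y \<or> Y \<subseteq> X" using C chainsD by blast
      then show "m a b \<in> \<Union>C" using XY CF unfolding fam_def filt_def by blast
    qed
    then show ?thesis by blast
  qed
qed

lemma filt_prime:
  assumes "filt Q" "z \<notin> Q" "\<And>x y. j x y \<in> Q \<Longrightarrow> x \<in> Q \<or> y \<in> Q"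
  shows "Q \<in> Xp A"
  using assms unfolding filt_def Xp_def prime_filter_def by blast


lemma con_props:
  assumes "\<theta> \<in> Con_WHB A"
  shows "(x, x) \<in> \<theta>" "(x, y) \<in> \<theta> \<Longrightarrow> (y, x) \<in> \<theta>"
    "(x, y) \<in> \<theta> \<Longrightarrow> (y, w) \<in> \<theta> \<Longrightarrow> (x, w) \<in> \<theta>"
    "(a, b) \<in> \<theta> \<Longrightarrow> (c, d) \<in> \<theta> \<Longrightarrow> (m a c, m b d) \<in> \<theta>"
    "(a, b) \<in> \<theta> \<Longrightarrow> (c, d) \<in> \<theta> \<Longrightarrow> (j a c, j b d) \<in> \<theta>"
    "(a, b) \<in> \<theta> \<Longrightarrow> (c, d) \<in> \<theta> \<Longrightarrow> (imp a c, imp b d) \<in> \<theta>"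
    "(a, b) \<in> \<theta> \<Longrightarrow> (c, d) \<in> \<theta> \<Longrightarrow> (cimp a c, cimp b d) \<in> \<theta>"
  using assms unfolding Con_WHB_def equiv_def refl_on_def sym_def trans_def by blast+

lemma hl1: "le (m (m a b) c) (m a c)" by (meson L.inf_le1 L.inf_mono L.order_refl)
lemma hl2: "le (m (m a b) c) (m b c)" by (meson L.inf_le2 L.inf_mono L.order_refl)

lemma shift:
  assumes th: "\<theta> \<in> Con_WHB A" and h: "(m c1 e1, c1) \<in> \<theta>" and "le c c1" "le e1 e"
  shows "(m c e, c) \<in> \<theta>"
proof -
  have "(m c (m c1 e1), m c c1) \<in> \<theta>" using con_props(4)[OF th con_props(1)[OF th] h] .
  moreover have "m c (m c1 e1) = m c e1" "m c c1 = c"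
    using assms(3) by (metis L.inf_absorb1 m_assoc)+
  ultimately have 1: "(m c e1, c) \<in> \<theta>" by simp
  have "le (m c e1) (m c e)" using assms(4) L.inf_mono L.order_refl by blast
  then have "m c e = j (m c e1) (m c e)" by (simp add: L.sup_absorb2)
  moreover have "(j (m c e1) (m c e), j c (m c e)) \<in> \<theta>"
    using con_props(5)[OF th 1 con_props(1)[OF th]] .
  moreover have "j c (m c e) = c" by (simp add: j_abs)
  ultimately show ?thesis by simp
qed

lemma prime_theta:
  assumes th: "\<theta> \<in> Con_WHB A"
    and F0: "filt F0" "clos (\<lambda>u v. (u, v) \<in> \<theta>) F0"
    and E: "b \<in> E" "\<And>x y. y \<in> E \<Longrightarrow> le x y \<Longrightarrow> x \<in> E"
       "\<And>x y. x \<in> E \<Longrightarrow> y \<in> E \<Longrightarrow> j x y \<in> E"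
    and disj: "F0 \<inter> E = {}"
  shows "\<exists>P\<in>Xp A. F0 \<subseteq> P \<and> P \<inter> E = {} \<and> (\<forall>u v. u \<in> P \<longrightarrow> (u, v) \<in> \<theta> \<longrightarrow> v \<in> P)"
proof -
  let ?R = "\<lambda>u v. (u, v) \<in> \<theta>"
  have "F0 \<in> fam F0 E ?R" using F0 disj unfolding fam_def by blast
  from zorn_fam[OF this] obtain Q where Q: "Q \<in> fam F0 E ?R"
    and mx: "\<And>Q'. Q' \<in> fam F0 E ?R \<Longrightarrow> Q \<subseteq> Q' \<Longrightarrow> Q' = Q" by blast
  have Qf: "filt Q" "F0 \<subseteq> Q" "Q \<inter> E = {}" "clos ?R Q" using Q unfolding fam_def by auto
  have up: "\<And>a b. a \<in> Q \<Longrightarrow> le a b \<Longrightarrow> b \<in> Q" and mQ: "\<And>a b. a \<in> Q \<Longrightarrow> b \<in> Q \<Longrightarrow> m a b \<in> Q"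
    and oQ: "on \<in> Q"
    using Qf(1) unfolding filt_def by blast+
  have cQ: "\<And>u v. u \<in> Q \<Longrightarrow> (u, v) \<in> \<theta> \<Longrightarrow> v \<in> Q" using Qf(4) unfolding clos_def by blast
  have ext: "\<exists>e\<in>E. \<exists>q\<in>Q. (m (m q w) e, m q w) \<in> \<theta>" if w: "w \<notin> Q" for w
  proof (rule ccontr)
    assume nex: "\<not> ?thesis"
    define Qx where "Qx = {v. \<exists>q\<in>Q. (m (m q w) v, m q w) \<in> \<theta>}"
    have QQ: "Q \<subseteq> Qx" unfolding Qx_def
    proof
      fix v assume "v \<in> Q"
      moreover have "m (m v w) v = m v w" by (metis L.inf_commute L.inf_left_commute m_idem)
      ultimately show "v \<in> {v. \<exists>q\<in>Q. (m (m q w) v, m q w) \<in> \<theta>}"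
        using con_props(1)[OF th, of "m v w"] by (metis (mono_tags, lifting) mem_Collect_eq)
    qed
    have wx: "w \<in> Qx" unfolding Qx_def using oQ con_props(1)[OF th]
      by (auto intro!: bexI[of _ on] simp: m_idem)
    have "Qx \<in> fam F0 E ?R"
      unfolding fam_def mem_Collect_eq filt_def clos_def
    proof (intro conjI allI impI)
      show "on \<in> Qx" using QQ oQ by blast
      show "F0 \<subseteq> Qx" using QQ Qf by blast
      show "Qx \<inter> E = {}" using nex unfolding Qx_def by blast
    next
      fix a b assume "a \<in> Qx" "le a b"
      then obtain q where q: "q \<in> Q" "(m (m q w) a, m q w) \<in> \<theta>" unfolding Qx_def by blast
      have "(m (m q w) b, m q w) \<in> \<theta>" by (rule shift[OF th q(2)]) (auto simp: \<open>le a b\<close>)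
      then show "b \<in> Qx" using q unfolding Qx_def by blast
    next
      fix a b assume "a \<in> Qx" "?R a b"
      then obtain q where q: "q \<in> Q" "(m (m q w) a, m q w) \<in> \<theta>" unfolding Qx_def by blast
      have "(m (m q w) b, m (m q w) a) \<in> \<theta>"
        using con_props(4)[OF th con_props(1)[OF th] con_props(2)[OF th \<open>?R a b\<close>]] .
      then have "(m (m q w) b, m q w) \<in> \<theta>" using q(2) con_props(3)[OF th] by blast
      then show "b \<in> Qx" using q unfolding Qx_def by blast
    next
      fix a b assume "a \<in> Qx" "b \<in> Qx"
      then obtain q1 q2 where q: "q1 \<in> Q" "(m (m q1 w) a, m q1 w) \<in> \<theta>"
        "q2 \<in> Q" "(m (m q2 w) b, m q2 w) \<in> \<theta>" unfolding Qx_def by blast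
      let ?q = "m q1 q2"
      have 1: "(m (m ?q w) a, m ?q w) \<in> \<theta>"
        by (rule shift[OF th q(2)]) (rule hl1, rule L.order_refl)
      have 2: "(m (m ?q w) b, m ?q w) \<in> \<theta>"
        by (rule shift[OF th q(4)]) (rule hl2, rule L.order_refl)
      have "(m (m (m ?q w) a) (m (m ?q w) b), m (m ?q w) (m ?q w)) \<in> \<theta>"
        by (rule con_props(4)[OF th 1 2])
      moreover have "m (m (m ?q w) a) (m (m ?q w) b) = m (m ?q w) (m a b)"
        by (metis L.inf_assoc L.inf_commute L.inf_left_commute m_idem)
      ultimately have "(m (m ?q w) (m a b), m ?q w) \<in> \<theta>" by (simp add: m_idem)
      then show "m a b \<in> Qx" using q mQ unfolding Qx_def by blast
    qed
    from mx[OF this QQ] wx w show False by blast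
  qed
  have zQ: "z \<notin> Q" using up[of z b] z_le E(1) Qf(3) by blast
  have prime: "x \<in> Q \<or> y \<in> Q" if xy: "j x y \<in> Q" for x y
  proof (rule ccontr)
    assume "\<not> ?thesis"
    then obtain e1 q1 e2 q2 where e: "e1 \<in> E" "q1 \<in> Q" "(m (m q1 x) e1, m q1 x) \<in> \<theta>"
      "e2 \<in> E" "q2 \<in> Q" "(m (m q2 y) e2, m q2 y) \<in> \<theta>" using ext by meson
    let ?q = "m q1 q2" let ?e = "j e1 e2"
    have 1: "(m (m ?q x) ?e, m ?q x) \<in> \<theta>"
      by (rule shift[OF th e(3)]) (rule hl1, rule L.sup_ge1)
    have 2: "(m (m ?q y) ?e, m ?q y) \<in> \<theta>"
      by (rule shift[OF th e(6)]) (rule hl2, rule L.sup_ge2)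
    have "(j (m (m ?q x) ?e) (m (m ?q y) ?e), j (m ?q x) (m ?q y)) \<in> \<theta>"
      by (rule con_props(5)[OF th 1 2])
    moreover have "j (m (m ?q x) ?e) (m (m ?q y) ?e) = m (m ?q (j x y)) ?e"
      "j (m ?q x) (m ?q y) = m ?q (j x y)"
      by (metis L.inf_commute L.inf_sup_distrib1)+
    ultimately have "(m (m ?q (j x y)) ?e, m ?q (j x y)) \<in> \<theta>" by simp
    moreover have "m ?q (j x y) \<in> Q" using e xy mQ by blast
    ultimately have "m (m ?q (j x y)) ?e \<in> Q" using cQ con_props(2)[OF th] by blast
    then have "?e \<in> Q" using up by (metis L.inf_le2)
    moreover have "?e \<in> E" using E e by blast
    ultimately show False using Qf(3) by blast
  qed
  have "Q \<in> Xp A" using filt_prime[OF Qf(1) zQ prime] by blast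
  then show ?thesis using Qf cQ by blast
qed


end

context W begin

lemma imp_witness:
  assumes P: "P \<in> Xp A" and nab: "imp a b \<notin> P"
  shows "\<exists>Q. (P, Q) \<in> RA A \<and> a \<in> Q \<and> b \<notin> Q"
proof -
  let ?R = "\<lambda>u v. imp u v \<in> P"
  define F0 where "F0 = {v. imp a v \<in> P}"
  have "F0 \<in> fam F0 {b} ?R"
    unfolding fam_def mem_Collect_eq filt_def clos_def
  proof (intro conjI allI impI)
    show "on \<in> F0" unfolding F0_def using imp_le_one[OF le_o] pf_one[OF P] by simp
    show "F0 \<inter> {b} = {}" unfolding F0_def using nab by blast
  next
    fix x y assume "x \<in> F0" "le x y"
    then show "y \<in> F0" unfolding F0_def using imp_mono2 pf_up[OF P] by blast
  next
    fix x y assume "x \<in> F0" "imp x y \<in> P"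
    then have "m (imp a x) (imp x y) \<in> P" unfolding F0_def using pf_meet[OF P] by blast
    then show "y \<in> F0" unfolding F0_def using imp_trans pf_up[OF P] by blast
  next
    fix x y assume "x \<in> F0" "y \<in> F0"
    then show "m x y \<in> F0" unfolding F0_def using imp_meet pf_meet[OF P] by simp
  qed simp
  from zorn_fam[OF this] obtain Q where Q: "Q \<in> fam F0 {b} ?R"
    and mx: "\<And>Q'. Q' \<in> fam F0 {b} ?R \<Longrightarrow> Q \<subseteq> Q' \<Longrightarrow> Q' = Q" by blast
  have Qf: "filt Q" "F0 \<subseteq> Q" "b \<notin> Q" "clos ?R Q" using Q unfolding fam_def by auto
  have up: "\<And>a b. a \<in> Q \<Longrightarrow> le a b \<Longrightarrow> b \<in> Q" and mQ: "\<And>a b. a \<in> Q \<Longrightarrow> b \<in> Q \<Longrightarrow> m a b \<in> Q"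
    and oQ: "on \<in> Q"
    using Qf(1) unfolding filt_def by blast+
  have cQ: "\<And>u v. u \<in> Q \<Longrightarrow> imp u v \<in> P \<Longrightarrow> v \<in> Q" using Qf(4) unfolding clos_def by blast
  have ext: "\<exists>q\<in>Q. imp (m q w) b \<in> P" if w: "w \<notin> Q" for w
  proof (rule ccontr)
    assume nex: "\<not> ?thesis"
    define Qx where "Qx = {v. \<exists>q\<in>Q. imp (m q w) v \<in> P}"
    have QQ: "Q \<subseteq> Qx" unfolding Qx_def
    proof
      fix v assume "v \<in> Q"
      moreover have "imp (m v w) v = on" by (rule imp_le_one) (rule L.inf_le1)
      ultimately show "v \<in> {v. \<exists>q\<in>Q. imp (m q w) v \<in> P}" using pf_one[OF P] by (metis (mono_tags, lifting) mem_Collect_eq)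
    qed
    have wx: "w \<in> Qx" unfolding Qx_def using oQ pf_one[OF P]
      by (auto intro!: bexI[of _ on] simp: imp_refl m_o)
    have "Qx \<in> fam F0 {b} ?R"
      unfolding fam_def mem_Collect_eq filt_def clos_def
    proof (intro conjI allI impI)
      show "on \<in> Qx" using QQ oQ by blast
      show "F0 \<subseteq> Qx" using QQ Qf by blast
      show "Qx \<inter> {b} = {}" using nex unfolding Qx_def by blast
    next
      fix x y assume "x \<in> Qx" "le x y"
      then show "y \<in> Qx" unfolding Qx_def using imp_mono2 pf_up[OF P] by blast
    next
      fix x y assume "x \<in> Qx" "imp x y \<in> P"
      then obtain q where q: "q \<in> Q" "imp (m q w) x \<in> P" unfolding Qx_def by blast
      then have "m (imp (m q w) x) (imp x y) \<in> P" using pf_meet[OF P] \<open>imp x y \<in> P\<close> by blast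
      then have "imp (m q w) y \<in> P" using imp_trans pf_up[OF P] by blast
      then show "y \<in> Qx" using q unfolding Qx_def by blast
    next
      fix x y assume "x \<in> Qx" "y \<in> Qx"
      then obtain q1 q2 where q: "q1 \<in> Q" "imp (m q1 w) x \<in> P" "q2 \<in> Q" "imp (m q2 w) y \<in> P"
        unfolding Qx_def by blast
      have "imp (m (m q1 q2) w) x \<in> P" using q(2) imp_anti1[OF hl1] pf_up[OF P] by blast
      moreover have "imp (m (m q1 q2) w) y \<in> P" using q(4) imp_anti1[OF hl2] pf_up[OF P] by blast
      ultimately have "imp (m (m q1 q2) w) (m x y) \<in> P" using imp_meet pf_meet[OF P] by simp
      then show "m x y \<in> Qx" using q mQ unfolding Qx_def by blast
    qed
    from mx[OF this QQ] wx w show False by blast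
  qed
  have zQ: "z \<notin> Q" using up[of z b] z_le Qf(3) by blast
  have prime: "x \<in> Q \<or> y \<in> Q" if xy: "j x y \<in> Q" for x y
  proof (rule ccontr)
    assume "\<not> ?thesis"
    then obtain q1 q2 where e: "q1 \<in> Q" "imp (m q1 x) b \<in> P" "q2 \<in> Q" "imp (m q2 y) b \<in> P"
      using ext by meson
    let ?q = "m q1 q2"
    have "imp (m ?q x) b \<in> P" using e(2) imp_anti1[OF hl1] pf_up[OF P] by blast
    moreover have "imp (m ?q y) b \<in> P" using e(4) imp_anti1[OF hl2] pf_up[OF P] by blast
    ultimately have "imp (j (m ?q x) (m ?q y)) b \<in> P" using imp_join pf_meet[OF P] by simp
    moreover have "j (m ?q x) (m ?q y) = m ?q (j x y)" by (metis L.inf_sup_distrib1)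
    moreover have "m ?q (j x y) \<in> Q" using e xy mQ by blast
    ultimately have "b \<in> Q" using cQ by metis
    then show False using Qf(3) by blast
  qed
  have "Q \<in> Xp A" using filt_prime[OF Qf(1) zQ prime] by blast
  moreover have "a \<in> Q" using Qf(2) unfolding F0_def using imp_refl pf_one[OF P] by auto
  ultimately show ?thesis using Qf cQ P unfolding RA_def by blast
qed

lemma cimp_witness:
  assumes P: "P \<in> Xp A" and nab: "cimp a b \<in> P"
  shows "\<exists>Q. (P, Q) \<in> SA A \<and> a \<in> Q \<and> b \<notin> Q"
proof -
  let ?R = "\<lambda>u v. cimp u v \<notin> P"
  define F0 where "F0 = {v. cimp a v \<notin> P}"
  have jn: "j x y \<notin> P" if "x \<notin> P" "y \<notin> P" for x y using that pf_join[OF P] by blast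
  have dn: "x \<notin> P" if "y \<notin> P" "le x y" for x y using that pf_up[OF P] by blast
  have "F0 \<in> fam F0 {b} ?R"
    unfolding fam_def mem_Collect_eq filt_def clos_def
  proof (intro conjI allI impI)
    show "on \<in> F0" unfolding F0_def using cimp_le_zero[OF le_o] pf_zero[OF P] by simp
    show "F0 \<inter> {b} = {}" unfolding F0_def using nab by blast
  next
    fix x y assume "x \<in> F0" "le x y"
    then show "y \<in> F0" unfolding F0_def using cimp_anti2 dn by blast
  next
    fix x y assume "x \<in> F0" "cimp x y \<notin> P"
    then show "y \<in> F0" unfolding F0_def using cimp_trans jn dn by blast
  next
    fix x y assume "x \<in> F0" "y \<in> F0"
    then show "m x y \<in> F0" unfolding F0_def using cimp_meet jn by simp
  qed simp
  from zorn_fam[OF this] obtain Q where Q: "Q \<in> fam F0 {b} ?R"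
    and mx: "\<And>Q'. Q' \<in> fam F0 {b} ?R \<Longrightarrow> Q \<subseteq> Q' \<Longrightarrow> Q' = Q" by blast
  have Qf: "filt Q" "F0 \<subseteq> Q" "b \<notin> Q" "clos ?R Q" using Q unfolding fam_def by auto
  have up: "\<And>a b. a \<in> Q \<Longrightarrow> le a b \<Longrightarrow> b \<in> Q" and mQ: "\<And>a b. a \<in> Q \<Longrightarrow> b \<in> Q \<Longrightarrow> m a b \<in> Q"
    and oQ: "on \<in> Q"
    using Qf(1) unfolding filt_def by blast+
  have cQ: "\<And>u v. u \<in> Q \<Longrightarrow> cimp u v \<notin> P \<Longrightarrow> v \<in> Q" using Qf(4) unfolding clos_def by blast
  have ext: "\<exists>q\<in>Q. cimp (m q w) b \<notin> P" if w: "w \<notin> Q" for w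
  proof (rule ccontr)
    assume nex: "\<not> ?thesis"
    define Qx where "Qx = {v. \<exists>q\<in>Q. cimp (m q w) v \<notin> P}"
    have QQ: "Q \<subseteq> Qx" unfolding Qx_def
    proof
      fix v assume "v \<in> Q"
      moreover have "cimp (m v w) v = z" by (rule cimp_le_zero) (rule L.inf_le1)
      ultimately show "v \<in> {v. \<exists>q\<in>Q. cimp (m q w) v \<notin> P}" using pf_zero[OF P] by (metis (mono_tags, lifting) mem_Collect_eq)
    qed
    have wx: "w \<in> Qx" unfolding Qx_def using oQ pf_zero[OF P]
      by (auto intro!: bexI[of _ on] simp: cimp_refl m_o)
    have "Qx \<in> fam F0 {b} ?R"
      unfolding fam_def mem_Collect_eq filt_def clos_def
    proof (intro conjI allI impI)
      show "on \<in> Qx" using QQ oQ by blast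
      show "F0 \<subseteq> Qx" using QQ Qf by blast
      show "Qx \<inter> {b} = {}" using nex unfolding Qx_def by blast
    next
      fix x y assume "x \<in> Qx" "le x y"
      then show "y \<in> Qx" unfolding Qx_def using cimp_anti2 dn by blast
    next
      fix x y assume "x \<in> Qx" "cimp x y \<notin> P"
      then obtain q where q: "q \<in> Q" "cimp (m q w) x \<notin> P" unfolding Qx_def by blast
      then have "cimp (m q w) y \<notin> P" using cimp_trans jn dn \<open>cimp x y \<notin> P\<close> by blast
      then show "y \<in> Qx" using q unfolding Qx_def by blast
    next
      fix x y assume "x \<in> Qx" "y \<in> Qx"
      then obtain q1 q2 where q: "q1 \<in> Q" "cimp (m q1 w) x \<notin> P" "q2 \<in> Q" "cimp (m q2 w) y \<notin> P"
        unfolding Qx_def by blast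
      have "cimp (m (m q1 q2) w) x \<notin> P" using q(2) cimp_mono1[OF hl1] dn by blast
      moreover have "cimp (m (m q1 q2) w) y \<notin> P" using q(4) cimp_mono1[OF hl2] dn by blast
      ultimately have "cimp (m (m q1 q2) w) (m x y) \<notin> P" using cimp_meet jn by simp
      then show "m x y \<in> Qx" using q mQ unfolding Qx_def by blast
    qed
    from mx[OF this QQ] wx w show False by blast
  qed
  have zQ: "z \<notin> Q" using up[of z b] z_le Qf(3) by blast
  have prime: "x \<in> Q \<or> y \<in> Q" if xy: "j x y \<in> Q" for x y
  proof (rule ccontr)
    assume "\<not> ?thesis"
    then obtain q1 q2 where e: "q1 \<in> Q" "cimp (m q1 x) b \<notin> P" "q2 \<in> Q" "cimp (m q2 y) b \<notin> P"
      using ext by meson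
    let ?q = "m q1 q2"
    have "cimp (m ?q x) b \<notin> P" using e(2) cimp_mono1[OF hl1] dn by blast
    moreover have "cimp (m ?q y) b \<notin> P" using e(4) cimp_mono1[OF hl2] dn by blast
    ultimately have "cimp (j (m ?q x) (m ?q y)) b \<notin> P" using cimp_join jn by simp
    moreover have "j (m ?q x) (m ?q y) = m ?q (j x y)" by (metis L.inf_sup_distrib1)
    moreover have "m ?q (j x y) \<in> Q" using e xy mQ by blast
    ultimately have "b \<in> Q" using cQ by metis
    then show False using Qf(3) by blast
  qed
  have "Q \<in> Xp A" using filt_prime[OF Qf(1) zQ prime] by blast
  moreover have "a \<in> Q" using Qf(2) unfolding F0_def using cimp_refl pf_zero[OF P] by auto
  ultimately show ?thesis using Qf cQ P unfolding SA_def by blast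
qed

end

context W begin

abbreviation sg where "sg \<equiv> sigmaA A"
abbreviation X where "X \<equiv> Xp A"

lemma sg_sub: "sg a \<subseteq> X" unfolding sigmaA_def by blast
lemma sg_mem: "P \<in> sg a \<longleftrightarrow> P \<in> X \<and> a \<in> P" unfolding sigmaA_def by blast
lemma sg_meet: "sg (m a b) = sg a \<inter> sg b" unfolding sigmaA_def using pf_meet by blast
lemma sg_join: "sg (j a b) = sg a \<union> sg b" unfolding sigmaA_def using pf_join by blast
lemma sg_one: "sg on = X" unfolding sigmaA_def using pf_one by blast
lemma sg_zero: "sg z = {}" unfolding sigmaA_def using pf_zero by blast

lemma RA_D: "(P, Q) \<in> RA A \<Longrightarrow> P \<in> X \<and> Q \<in> X \<and> (\<forall>a b. imp a b \<in> P \<longrightarrow> a \<in> Q \<longrightarrow> b \<in> Q)"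
  by (simp add: RA_def)
lemma SA_D: "(P, Q) \<in> SA A \<Longrightarrow> P \<in> X \<and> Q \<in> X \<and> (\<forall>a b. a \<in> Q \<longrightarrow> b \<notin> Q \<longrightarrow> cimp a b \<in> P)"
  by (simp add: SA_def)

lemma sg_imp: "sg (imp a b) = {P \<in> X. RA A `` {P} \<subseteq> (X - sg a) \<union> sg b}"
proof (intro set_eqI iffI)
  fix P assume P: "P \<in> sg (imp a b)"
  then have PX: "P \<in> X" and c: "imp a b \<in> P" by (simp_all add: sg_mem)
  have "Q \<in> (X - sg a) \<union> sg b" if "Q \<in> RA A `` {P}" for Q
  proof -
    have Q1: "(P, Q) \<in> RA A" using that by simp
    have QX: "Q \<in> X" using RA_D[OF Q1] by simp
    have "a \<in> Q \<longrightarrow> b \<in> Q" using RA_D[OF Q1] c by blast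
    then show ?thesis using QX by (simp add: sg_mem)
  qed
  then have "RA A `` {P} \<subseteq> (X - sg a) \<union> sg b" by (rule subsetI)
  then show "P \<in> {P \<in> X. RA A `` {P} \<subseteq> (X - sg a) \<union> sg b}" using PX by simp
next
  fix P assume P: "P \<in> {P \<in> X. RA A `` {P} \<subseteq> (X - sg a) \<union> sg b}"
  then have PX: "P \<in> X" and sub: "RA A `` {P} \<subseteq> (X - sg a) \<union> sg b" by simp_all
  show "P \<in> sg (imp a b)"
  proof (rule ccontr)
    assume "P \<notin> sg (imp a b)"
    then have "imp a b \<notin> P" using PX by (simp add: sg_mem)
    then obtain Q where Q: "(P, Q) \<in> RA A" "a \<in> Q" "b \<notin> Q" using imp_witness[OF PX] by blast
    have QX: "Q \<in> X" using RA_D[OF Q(1)] by simp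
    have "Q \<in> RA A `` {P}" using Q(1) by simp
    then have "Q \<in> (X - sg a) \<union> sg b" using sub by (rule subsetD[rotated])
    then show False using Q QX by (simp add: sg_mem)
  qed
qed

lemma sg_cimp: "sg (cimp a b) = X - {P \<in> X. SA A `` {P} \<subseteq> (X - sg a) \<union> sg b}"
proof (intro set_eqI iffI)
  fix P assume P: "P \<in> sg (cimp a b)"
  then have PX: "P \<in> X" and c: "cimp a b \<in> P" by (simp_all add: sg_mem)
  obtain Q where Q: "(P, Q) \<in> SA A" "a \<in> Q" "b \<notin> Q" using cimp_witness[OF PX c] by blast
  have QX: "Q \<in> X" using SA_D[OF Q(1)] by simp
  have "Q \<notin> (X - sg a) \<union> sg b" using QX Q(2,3) by (simp add: sg_mem)
  moreover have "Q \<in> SA A `` {P}" using Q(1) by simp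
  ultimately have "\<not> SA A `` {P} \<subseteq> (X - sg a) \<union> sg b" by blast
  then show "P \<in> X - {P \<in> X. SA A `` {P} \<subseteq> (X - sg a) \<union> sg b}" using PX by simp
next
  fix P assume P: "P \<in> X - {P \<in> X. SA A `` {P} \<subseteq> (X - sg a) \<union> sg b}"
  then have PX: "P \<in> X" and ns: "\<not> SA A `` {P} \<subseteq> (X - sg a) \<union> sg b" by simp_all
  then obtain Q where Q: "Q \<in> SA A `` {P}" "Q \<notin> (X - sg a) \<union> sg b" by blast
  have Q1: "(P, Q) \<in> SA A" using Q(1) by simp
  have QX: "Q \<in> X" using SA_D[OF Q1] by simp
  have "a \<in> Q" "b \<notin> Q" using Q(2) QX by (simp_all add: sg_mem)
  then have "cimp a b \<in> P" using SA_D[OF Q1] by blast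
  then show "P \<in> sg (cimp a b)" using PX by (simp add: sg_mem)
qed

end

context W begin
abbreviation Bs where "Bs \<equiv> range sg \<union> (\<lambda>a. X - sg a) ` UNIV"

lemma UBs: "\<Union>Bs = X"
proof
  show "\<Union>Bs \<subseteq> X" using sg_sub by auto
  show "X \<subseteq> \<Union>Bs"
  proof
    fix P assume "P \<in> X"
    then have "P \<in> X - sg z" using sg_zero by simp
    moreover have "X - sg z \<in> Bs" by (intro UnI2 rangeI)
    ultimately show "P \<in> \<Union>Bs" by (rule UnionI[rotated])
  qed
qed

lemma topsp: "topspace (tauA A) = X"
  unfolding tauA_def topology_generated_by_topspace using UBs .

lemma open_sg: "openin (tauA A) (sg a)"
  unfolding tauA_def by (rule topology_generated_by_Basis) (intro UnI1 rangeI)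
lemma open_nsg: "openin (tauA A) (X - sg a)"
  unfolding tauA_def by (rule topology_generated_by_Basis) (intro UnI2 rangeI)
lemma closed_sg: "closedin (tauA A) (sg a)"
  unfolding closedin_def topsp using open_nsg sg_sub by (intro conjI)
lemma closed_nsg: "closedin (tauA A) (X - sg a)"
proof -
  have "X - (X - sg a) = sg a" using sg_sub[of a] by (rule double_diff) (rule order_refl)
  then show ?thesis unfolding closedin_def topsp using open_sg by simp
qed

lemma basic_nbhd:
  assumes "openin (tauA A) U" "P \<in> U"
  shows "\<exists>c d. P \<in> sg c \<and> P \<notin> sg d \<and> sg c - sg d \<subseteq> U"
proof -
  have "generate_topology_on Bs U" using assms(1) unfolding tauA_def
    by (rule openin_topology_generated_by)
  then have "\<forall>P\<in>U. \<exists>c d. P \<in> sg c \<and> P \<notin> sg d \<and> sg c - sg d \<subseteq> U"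
  proof (induction rule: generate_topology_on.induct)
    case Empty then show ?case by simp
  next
    case (Int a b)
    show ?case
    proof
      fix P assume P: "P \<in> a \<inter> b"
      then have "P \<in> a" "P \<in> b" by simp_all
      then obtain c1 d1 c2 d2 where h: "P \<in> sg c1" "P \<notin> sg d1" "sg c1 - sg d1 \<subseteq> a"
        "P \<in> sg c2" "P \<notin> sg d2" "sg c2 - sg d2 \<subseteq> b" using Int.IH by meson
      have "P \<in> sg (m c1 c2)" "P \<notin> sg (j d1 d2)" using h unfolding sg_meet sg_join by simp_all
      moreover have "sg (m c1 c2) - sg (j d1 d2) \<subseteq> a \<inter> b"
        unfolding sg_meet sg_join using h(3,6) by fast
      ultimately show "\<exists>c d. P \<in> sg c \<and> P \<notin> sg d \<and> sg c - sg d \<subseteq> a \<inter> b" by meson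
    qed
  next
    case (UN K)
    show ?case
    proof
      fix P assume "P \<in> \<Union>K"
      then obtain k where k: "k \<in> K" "P \<in> k" by (rule UnionE)
      then obtain c d where "P \<in> sg c" "P \<notin> sg d" "sg c - sg d \<subseteq> k" using UN.IH by meson
      moreover have "k \<subseteq> \<Union>K" using k(1) by (rule Union_upper)
      ultimately show "\<exists>c d. P \<in> sg c \<and> P \<notin> sg d \<and> sg c - sg d \<subseteq> \<Union>K"
        by (meson order_trans)
    qed
  next
    case (Basis s)
    show ?case
    proof
      fix P assume P: "P \<in> s"
      from Basis consider a where "s = sg a" | a where "s = X - sg a" by (elim UnE rangeE) simp_all
      then show "\<exists>c d. P \<in> sg c \<and> P \<notin> sg d \<and> sg c - sg d \<subseteq> s"
      proof cases
        case 1
        then have "P \<in> sg a" "P \<notin> sg z" "sg a - sg z \<subseteq> s" using P sg_zero by simp_all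
        then show ?thesis by meson
      next
        case 2
        then have "P \<in> sg on" "P \<notin> sg a" "sg on - sg a \<subseteq> s" using P sg_one by simp_all
        then show ?thesis by meson
      qed
    qed
  qed
  then show ?thesis using assms(2) by (rule bspec)
qed

end

context W begin

lemma Id_con: "Id \<in> Con_WHB A"
  unfolding Con_WHB_def equiv_def refl_on_def sym_def trans_def by simp

lemma fm_app: "foldr m (xs @ ys) on = m (foldr m xs on) (foldr m ys on)"
  by (induction xs) (simp_all add: m_o m_assoc)
lemma fj_app: "foldr j (xs @ ys) z = j (foldr j xs z) (foldr j ys z)"
  by (induction xs) (simp_all add: j_assoc, metis L.sup_commute L.sup_absorb1 z_le)
lemma fm_mem: "P \<in> X \<Longrightarrow> foldr m js on \<in> P \<longleftrightarrow> (\<forall>b\<in>set js. b \<in> P)"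
  by (induction js) (simp_all add: pf_meet pf_one)
lemma fj_mem: "P \<in> X \<Longrightarrow> foldr j is z \<in> P \<longleftrightarrow> (\<exists>a\<in>set is. a \<in> P)"
  by (induction "is") (simp_all add: pf_join pf_zero)

lemma fin_cover:
  assumes C: "C \<subseteq> Bs" and cov: "X \<subseteq> \<Union>C"
  shows "\<exists>C'. finite C' \<and> C' \<subseteq> C \<and> X \<subseteq> \<Union>C'"
proof -
  define I where "I = {a. sg a \<in> C}"
  define J where "J = {b. X - sg b \<in> C}"
  define F0 where "F0 = {x. \<exists>js. set js \<subseteq> J \<and> le (foldr m js on) x}"
  define E where "E = {y. \<exists>is. set is \<subseteq> I \<and> le y (foldr j is z)}"
  show ?thesis
  proof (cases "F0 \<inter> E = {}")
    case False
    then obtain x js "is" where h: "set js \<subseteq> J" "le (foldr m js on) x" "set is \<subseteq> I" "le x (foldr j is z)"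
      unfolding F0_def E_def by blast
    have le1: "le (foldr m js on) (foldr j is z)" using h(2,4) by (rule L.order_trans)
    define C' where "C' = sg ` set is \<union> (\<lambda>b. X - sg b) ` set js"
    have "finite C'" unfolding C'_def by simp
    moreover have "C' \<subseteq> C" using h(1,3) unfolding C'_def I_def J_def by blast
    moreover have "X \<subseteq> \<Union>C'"
    proof
      fix P assume P: "P \<in> X"
      show "P \<in> \<Union>C'"
      proof (cases "\<forall>b\<in>set js. b \<in> P")
        case True
        then have "foldr m js on \<in> P" using fm_mem[OF P] by simp
        then have "foldr j is z \<in> P" using le1 pf_up[OF P] by blast
        then obtain a where a: "a \<in> set is" "a \<in> P" using fj_mem[OF P] by blast
        then have "P \<in> sg a" using P by (simp add: sg_mem)
        moreover have "sg a \<in> C'" using a(1) unfolding C'_def by blast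
        ultimately show ?thesis by (rule UnionI[rotated])
      next
        case False
        then obtain b where b: "b \<in> set js" "b \<notin> P" by blast
        then have "P \<in> X - sg b" using P by (simp add: sg_mem)
        moreover have "X - sg b \<in> C'" using b(1) unfolding C'_def by blast
        ultimately show ?thesis by (rule UnionI[rotated])
      qed
    qed
    ultimately show ?thesis by blast
  next
    case True
    have F0f: "filt F0" unfolding filt_def
    proof (intro conjI allI impI)
      show "on \<in> F0" unfolding F0_def by (rule CollectI, rule exI[of _ "[]"]) simp
    next
      fix x y assume "x \<in> F0" "le x y" then show "y \<in> F0"
        unfolding F0_def using L.order_trans by blast
    next
      fix x y assume "x \<in> F0" "y \<in> F0"
      then obtain js1 js2 where "set js1 \<subseteq> J" "le (foldr m js1 on) x" "set js2 \<subseteq> J" "le (foldr m js2 on) y"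
        unfolding F0_def by blast
      then have "set (js1 @ js2) \<subseteq> J" "le (foldr m (js1 @ js2) on) (m x y)"
        unfolding fm_app by (auto intro: L.le_infI1 L.le_infI2)
      then show "m x y \<in> F0" unfolding F0_def by blast
    qed
    have F0c: "clos (\<lambda>u v. (u, v) \<in> Id) F0" unfolding clos_def by simp
    have E1: "z \<in> E" unfolding E_def by (rule CollectI, rule exI[of _ "[]"]) simp
    have E2: "x \<in> E" if "y \<in> E" "le x y" for x y
      using that unfolding E_def using L.order_trans by blast
    have E3: "j x y \<in> E" if xy: "x \<in> E" "y \<in> E" for x y
    proof -
      obtain is1 is2 where "set is1 \<subseteq> I" "le x (foldr j is1 z)" "set is2 \<subseteq> I" "le y (foldr j is2 z)"
        using xy unfolding E_def by blast
      then have "set (is1 @ is2) \<subseteq> I" "le (j x y) (foldr j (is1 @ is2) z)"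
        unfolding fj_app by (auto intro: L.le_supI1 L.le_supI2)
      then show ?thesis unfolding E_def by blast
    qed
    have "\<exists>P\<in>X. F0 \<subseteq> P \<and> P \<inter> E = {} \<and> (\<forall>u v. u \<in> P \<longrightarrow> (u, v) \<in> Id \<longrightarrow> v \<in> P)"
      apply (rule prime_theta[OF Id_con F0f F0c E1 _ _ True])
      using E2 E3 by blast+
    then obtain P where P: "P \<in> X" "F0 \<subseteq> P" "P \<inter> E = {}" by blast
    obtain c where c: "c \<in> C" "P \<in> c" using cov P(1) by blast
    then have "c \<in> Bs" using C by blast
    then consider a where "c = sg a" | a where "c = X - sg a" by (elim UnE rangeE) simp_all
    then show ?thesis
    proof cases
      case 1
      then have "a \<in> I" "a \<in> P" using c by (simp_all add: I_def sg_mem)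
      then have "a \<in> E" unfolding E_def
        by (intro CollectI exI[of _ "[a]"]) (simp add: L.sup_absorb1 z_le L.sup_commute)
      then show ?thesis using \<open>a \<in> P\<close> P(3) by blast
    next
      case 2
      then have "a \<in> J" "a \<notin> P" using c by (simp_all add: J_def sg_mem)
      then have "a \<in> F0" unfolding F0_def
        by (intro CollectI exI[of _ "[a]"]) (simp add: m_comm[of a on] m_o)
      then show ?thesis using \<open>a \<notin> P\<close> P(2) by blast
    qed
  qed
qed

lemma tau_eq: "topology (arbitrary union_of (finite intersection_of (\<lambda>x. x \<in> Bs) relative_to X)) = tauA A"
proof -
  have XB: "X \<in> Bs" using sg_one by (metis UnI1 rangeI)
  have BX: "b \<subseteq> X" if "b \<in> Bs" for b using that sg_sub by blast
  have eq: "(finite intersection_of (\<lambda>x. x \<in> Bs) relative_to X) = (finite' intersection_of (\<lambda>x. x \<in> Bs))"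
  proof (intro ext iffI)
    fix S assume "(finite intersection_of (\<lambda>x. x \<in> Bs) relative_to X) S"
    then obtain U where U: "finite U" "U \<subseteq> Bs" "X \<inter> \<Inter>U = S"
      unfolding relative_to_def intersection_of_def by auto
    have "finite' (insert X U)" using U by simp
    moreover have "insert X U \<subseteq> Collect (\<lambda>x. x \<in> Bs)" using U(2) XB by blast
    moreover have "\<Inter>(insert X U) = S" using U by simp
    ultimately show "(finite' intersection_of (\<lambda>x. x \<in> Bs)) S"
      unfolding intersection_of_def by blast
  next
    fix S assume "(finite' intersection_of (\<lambda>x. x \<in> Bs)) S"
    then obtain U where U: "finite U" "U \<noteq> {}" "U \<subseteq> Bs" "\<Inter>U = S"
      unfolding intersection_of_def by auto
    have "\<Inter>U \<subseteq> X" using U(2,3) BX by blast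
    then have "X \<inter> \<Inter>U = S" using U(4) by blast
    moreover have "(finite intersection_of (\<lambda>x. x \<in> Bs)) (\<Inter>U)"
      unfolding intersection_of_def using U(1,3) by blast
    ultimately show "(finite intersection_of (\<lambda>x. x \<in> Bs) relative_to X) S"
      unfolding relative_to_def by blast
  qed
  show ?thesis unfolding eq tauA_def generate_topology_on_eq ..
qed

lemma compact: "compact_space (tauA A)"
  by (rule Alexander_subbase_alt[of X Bs, OF _ fin_cover tau_eq]) (simp only: UBs order_refl)+

end

context W begin

abbreviation T where "T \<equiv> tauA A"
abbreviation tc where "tc \<equiv> tcar (TA A)"
abbreviation GG where "GG U \<equiv> {P \<in> X. RA A `` {P} \<subseteq> U}"
abbreviation HH where "HH U \<equiv> {P \<in> X. SA A `` {P} \<subseteq> U}"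

lemma TA_simps: "tcar (TA A) = {U. openin T U \<and> closedin T U}"
  "tmeet (TA A) = (\<inter>)" "tjoin (TA A) = (\<union>)" "tneg (TA A) = (\<lambda>U. X - U)"
  "tG (TA A) = (\<lambda>U. GG U)" "tH (TA A) = (\<lambda>U. HH U)"
  unfolding TA_def by simp_all

lemma tc_iff: "U \<in> tc \<longleftrightarrow> openin T U \<and> closedin T U" by (simp add: TA_simps)
lemma tc_sub: "U \<in> tc \<Longrightarrow> U \<subseteq> X"
  using openin_subset topsp tc_iff by metis
lemma tc_sg: "sg a \<in> tc" using open_sg closed_sg tc_iff by blast
lemma tc_nsg: "X - sg a \<in> tc" using open_nsg closed_nsg tc_iff by blast
lemma tc_X: "X \<in> tc" using openin_topspace[of T] closedin_topspace[of T] topsp tc_iff by metis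
lemma tc_Int: "U \<in> tc \<Longrightarrow> V \<in> tc \<Longrightarrow> U \<inter> V \<in> tc" using tc_iff openin_Int closedin_Int by metis
lemma tc_Un: "U \<in> tc \<Longrightarrow> V \<in> tc \<Longrightarrow> U \<union> V \<in> tc" using tc_iff openin_Un closedin_Un by metis
lemma tc_diff: "U \<in> tc \<Longrightarrow> X - U \<in> tc"
  using tc_iff openin_diff closedin_diff openin_topspace closedin_topspace topsp by metis
lemma tc_empty: "{} \<in> tc" using tc_diff[OF tc_X] by simp

lemma tc_UN: "finite K \<Longrightarrow> (\<And>k. k \<in> K \<Longrightarrow> F k \<in> tc) \<Longrightarrow> \<Union>(F ` K) \<in> tc"
proof (induction K rule: finite_induct)
  case empty then show ?case using tc_empty by simp
next
  case (insert x F) then show ?case using tc_Un by simp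
qed

lemma open_basic: "openin T (sg c - sg d)"
proof -
  have "sg c - sg d = sg c \<inter> (X - sg d)" using sg_sub by blast
  then show ?thesis using openin_Int[OF open_sg open_nsg] by simp
qed

end

context W begin
lemma cnf:
  assumes U: "U \<in> tc"
  shows "\<exists>K. finite K \<and> X - U = (\<Union>p\<in>K. sg (fst p) - sg (snd p))"
proof -
  let ?V = "X - U"
  have Vc: "closedin T ?V" using tc_diff[OF U] tc_iff by blast
  have Vo: "openin T ?V" using tc_diff[OF U] tc_iff by blast
  have cV: "compactin T ?V" using closedin_compact_space[OF compact Vc] .
  define \<U> where "\<U> = {W. \<exists>c d. W = sg c - sg d \<and> W \<subseteq> ?V}"
  have "\<forall>W\<in>\<U>. openin T W" unfolding \<U>_def using open_basic by blast
  moreover have "?V \<subseteq> \<Union>\<U>"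
  proof
    fix P assume "P \<in> ?V"
    then obtain c d where "P \<in> sg c" "P \<notin> sg d" "sg c - sg d \<subseteq> ?V" using basic_nbhd[OF Vo] by blast
    then show "P \<in> \<Union>\<U>" unfolding \<U>_def by blast
  qed
  ultimately have "(\<forall>W\<in>\<U>. openin T W) \<and> ?V \<subseteq> \<Union>\<U>" by (rule conjI)
  moreover have "\<forall>\<U>. (\<forall>W\<in>\<U>. openin T W) \<and> ?V \<subseteq> \<Union>\<U> \<longrightarrow> (\<exists>\<F>. finite \<F> \<and> \<F> \<subseteq> \<U> \<and> ?V \<subseteq> \<Union>\<F>)"
    using cV unfolding compactin_def by (rule conjunct2)
  ultimately have "\<exists>\<F>. finite \<F> \<and> \<F> \<subseteq> \<U> \<and> ?V \<subseteq> \<Union>\<F>" by (rule mp[OF spec[of _ \<U>], rotated])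
  then obtain \<F> where F: "finite \<F>" "\<F> \<subseteq> \<U>" "?V \<subseteq> \<Union>\<F>" by (elim exE conjE)
  define pr where "pr W = (SOME p. W = sg (fst p) - sg (snd p))" for W
  have pr: "W = sg (fst (pr W)) - sg (snd (pr W))" if W: "W \<in> \<F>" for W
  proof -
    obtain c d where "W = sg c - sg d" using W F(2) unfolding \<U>_def by blast
    then have "\<exists>p. W = sg (fst p) - sg (snd p)" by (intro exI[of _ "(c, d)"]) simp
    then show ?thesis unfolding pr_def by (rule someI_ex)
  qed
  have "(\<Union>p\<in>pr ` \<F>. sg (fst p) - sg (snd p)) = (\<Union>W\<in>\<F>. sg (fst (pr W)) - sg (snd (pr W)))"
    by (simp add: image_image)
  also have "\<dots> = (\<Union>W\<in>\<F>. W)" using pr by (intro SUP_cong refl) (rule sym)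
  finally have "(\<Union>p\<in>pr ` \<F>. sg (fst p) - sg (snd p)) = \<Union>\<F>" by simp
  moreover have "\<Union>\<F> \<subseteq> ?V" using F(2) unfolding \<U>_def by auto
  ultimately have "X - U = (\<Union>p\<in>pr ` \<F>. sg (fst p) - sg (snd p))" using F(3) by (rule_tac equalityI) simp_all
  moreover have "finite (pr ` \<F>)" using F(1) by simp
  ultimately show ?thesis by (intro exI[of _ "pr ` \<F>"]) simp
qed

end

context W begin
lemma G_eq:
  assumes "finite K" "X - U = (\<Union>p\<in>K. sg (fst p) - sg (snd p))" "U \<subseteq> X"
  shows "GG U = X - (\<Union>p\<in>K. X - sg (imp (fst p) (snd p)))"
proof (intro set_eqI iffI)
  fix P assume P: "P \<in> GG U"
  then have PX: "P \<in> X" and sub: "RA A `` {P} \<subseteq> U" by simp_all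
  have "P \<in> sg (imp (fst p) (snd p))" if p: "p \<in> K" for p
  proof -
    have "Q \<in> (X - sg (fst p)) \<union> sg (snd p)" if "Q \<in> RA A `` {P}" for Q
    proof -
      have QX: "Q \<in> X" using RA_D[of P Q] that by simp
      have "Q \<in> U" using that sub by blast
      then have "Q \<notin> sg (fst p) - sg (snd p)" using assms(2) p by blast
      then show ?thesis using QX by blast
    qed
    then show ?thesis unfolding sg_imp using PX by blast
  qed
  then show "P \<in> X - (\<Union>p\<in>K. X - sg (imp (fst p) (snd p)))" using PX by blast
next
  fix P assume P: "P \<in> X - (\<Union>p\<in>K. X - sg (imp (fst p) (snd p)))"
  then have PX: "P \<in> X" and all: "\<And>p. p \<in> K \<Longrightarrow> P \<in> sg (imp (fst p) (snd p))" by blast+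
  have "Q \<in> U" if Q: "Q \<in> RA A `` {P}" for Q
  proof (rule ccontr)
    assume "Q \<notin> U"
    moreover have QX: "Q \<in> X" using RA_D[of P Q] Q by simp
    ultimately have "Q \<in> X - U" by simp
    then obtain p where p: "p \<in> K" "Q \<in> sg (fst p)" "Q \<notin> sg (snd p)" using assms(2) by blast
    have "RA A `` {P} \<subseteq> (X - sg (fst p)) \<union> sg (snd p)" using all[OF p(1)] unfolding sg_imp by simp
    then show False using Q p(2,3) by blast
  qed
  then show "P \<in> GG U" using PX by blast
qed

lemma H_eq:
  assumes "finite K" "X - U = (\<Union>p\<in>K. sg (fst p) - sg (snd p))" "U \<subseteq> X"
  shows "HH U = X - (\<Union>p\<in>K. sg (cimp (fst p) (snd p)))"
proof (intro set_eqI iffI)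
  fix P assume P: "P \<in> HH U"
  then have PX: "P \<in> X" and sub: "SA A `` {P} \<subseteq> U" by simp_all
  have "P \<notin> sg (cimp (fst p) (snd p))" if p: "p \<in> K" for p
  proof -
    have "Q \<in> (X - sg (fst p)) \<union> sg (snd p)" if "Q \<in> SA A `` {P}" for Q
    proof -
      have QX: "Q \<in> X" using SA_D[of P Q] that by simp
      have "Q \<in> U" using that sub by blast
      then have "Q \<notin> sg (fst p) - sg (snd p)" using assms(2) p by blast
      then show ?thesis using QX by blast
    qed
    then show ?thesis unfolding sg_cimp using PX by blast
  qed
  then show "P \<in> X - (\<Union>p\<in>K. sg (cimp (fst p) (snd p)))" using PX by blast
next
  fix P assume P: "P \<in> X - (\<Union>p\<in>K. sg (cimp (fst p) (snd p)))"
  then have PX: "P \<in> X" and all: "\<And>p. p \<in> K \<Longrightarrow> P \<notin> sg (cimp (fst p) (snd p))" by blast+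
  have "Q \<in> U" if Q: "Q \<in> SA A `` {P}" for Q
  proof (rule ccontr)
    assume "Q \<notin> U"
    moreover have QX: "Q \<in> X" using SA_D[of P Q] Q by simp
    ultimately have "Q \<in> X - U" by simp
    then obtain p where p: "p \<in> K" "Q \<in> sg (fst p)" "Q \<notin> sg (snd p)" using assms(2) by blast
    have "SA A `` {P} \<subseteq> (X - sg (fst p)) \<union> sg (snd p)" using all[OF p(1)] PX unfolding sg_cimp by simp
    then show False using Q p(2,3) by blast
  qed
  then show "P \<in> HH U" using PX by blast
qed

lemma tc_G: "U \<in> tc \<Longrightarrow> GG U \<in> tc"
proof -
  assume U: "U \<in> tc"
  obtain K where K: "finite K" "X - U = (\<Union>p\<in>K. sg (fst p) - sg (snd p))" using cnf[OF U] by blast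
  show ?thesis unfolding G_eq[OF K tc_sub[OF U]]
    by (rule tc_diff, rule tc_UN[OF K(1)], rule tc_nsg)
qed

lemma tc_H: "U \<in> tc \<Longrightarrow> HH U \<in> tc"
proof -
  assume U: "U \<in> tc"
  obtain K where K: "finite K" "X - U = (\<Union>p\<in>K. sg (fst p) - sg (snd p))" using cnf[OF U] by blast
  show ?thesis unfolding H_eq[OF K tc_sub[OF U]]
    by (rule tc_diff, rule tc_UN[OF K(1)], rule tc_sg)
qed

end

context W begin

lemma tcon:
  assumes "\<phi> \<in> Con_TBA (TA A)"
  shows "(U, V) \<in> \<phi> \<Longrightarrow> U \<in> tc \<and> V \<in> tc"
    "U \<in> tc \<Longrightarrow> (U, U) \<in> \<phi>"
    "(U, V) \<in> \<phi> \<Longrightarrow> (V, U) \<in> \<phi>"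
    "(U, V) \<in> \<phi> \<Longrightarrow> (V, U2) \<in> \<phi> \<Longrightarrow> (U, U2) \<in> \<phi>"
    "(U, V) \<in> \<phi> \<Longrightarrow> (U', V') \<in> \<phi> \<Longrightarrow> (U \<inter> U', V \<inter> V') \<in> \<phi>"
    "(U, V) \<in> \<phi> \<Longrightarrow> (U', V') \<in> \<phi> \<Longrightarrow> (U \<union> U', V \<union> V') \<in> \<phi>"
    "(U, V) \<in> \<phi> \<Longrightarrow> (X - U, X - V) \<in> \<phi>"
    "(U, V) \<in> \<phi> \<Longrightarrow> (GG U, GG V) \<in> \<phi>"
    "(U, V) \<in> \<phi> \<Longrightarrow> (HH U, HH V) \<in> \<phi>"
proof -
  have e: "equiv tc \<phi>" and c1: "\<forall>a b c d. (a, b) \<in> \<phi> \<longrightarrow> (c, d) \<in> \<phi> \<longrightarrow> (a \<inter> c, b \<inter> d) \<in> \<phi> \<and> (a \<union> c, b \<union> d) \<in> \<phi>"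
    and c2: "\<forall>a b. (a, b) \<in> \<phi> \<longrightarrow> (X - a, X - b) \<in> \<phi> \<and> (GG a, GG b) \<in> \<phi> \<and> (HH a, HH b) \<in> \<phi>"
    using assms unfolding Con_TBA_def TA_simps by simp_all
  show "(U, V) \<in> \<phi> \<Longrightarrow> U \<in> tc \<and> V \<in> tc" using e unfolding equiv_def refl_on_def by blast
  show "U \<in> tc \<Longrightarrow> (U, U) \<in> \<phi>" using e unfolding equiv_def refl_on_def by blast
  show "(U, V) \<in> \<phi> \<Longrightarrow> (V, U) \<in> \<phi>" using e unfolding equiv_def by (meson symD)
  show "(U, V) \<in> \<phi> \<Longrightarrow> (V, U2) \<in> \<phi> \<Longrightarrow> (U, U2) \<in> \<phi>" using e unfolding equiv_def by (meson transD)
  show "(U, V) \<in> \<phi> \<Longrightarrow> (U', V') \<in> \<phi> \<Longrightarrow> (U \<inter> U', V \<inter> V') \<in> \<phi>" using c1 by blast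
  show "(U, V) \<in> \<phi> \<Longrightarrow> (U', V') \<in> \<phi> \<Longrightarrow> (U \<union> U', V \<union> V') \<in> \<phi>" using c1 by blast
  show "(U, V) \<in> \<phi> \<Longrightarrow> (X - U, X - V) \<in> \<phi>" using c2 by blast
  show "(U, V) \<in> \<phi> \<Longrightarrow> (GG U, GG V) \<in> \<phi>" using c2 by blast
  show "(U, V) \<in> \<phi> \<Longrightarrow> (HH U, HH V) \<in> \<phi>" using c2 by blast
qed

end

context W begin
definition Yt where "Yt \<theta> = {P \<in> X. \<forall>u v. u \<in> P \<longrightarrow> (u, v) \<in> \<theta> \<longrightarrow> v \<in> P}"
definition ff where "ff \<theta> = {(U, V). U \<in> tc \<and> V \<in> tc \<and> U \<inter> Yt \<theta> = V \<inter> Yt \<theta>}"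
definition gg where "gg \<phi> = {(a, b). (sg a, sg b) \<in> \<phi>}"

lemma Yt_sub: "Yt \<theta> \<subseteq> X" unfolding Yt_def by blast
lemma Yt_mem: "P \<in> Yt \<theta> \<longleftrightarrow> P \<in> X \<and> (\<forall>u v. u \<in> P \<longrightarrow> (u, v) \<in> \<theta> \<longrightarrow> v \<in> P)"
  unfolding Yt_def by simp

lemma Yt_R:
  assumes th: "\<theta> \<in> Con_WHB A" and P: "P \<in> Yt \<theta>" and PQ: "(P, Q) \<in> RA A"
  shows "Q \<in> Yt \<theta>"
proof -
  have PX: "P \<in> X" and sat: "\<And>u v. u \<in> P \<Longrightarrow> (u, v) \<in> \<theta> \<Longrightarrow> v \<in> P" using P unfolding Yt_mem by blast+
  have QX: "Q \<in> X" and R: "\<And>a b. imp a b \<in> P \<Longrightarrow> a \<in> Q \<Longrightarrow> b \<in> Q" using RA_D[OF PQ] by blast+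
  have "v \<in> Q" if "u \<in> Q" "(u, v) \<in> \<theta>" for u v
  proof -
    have "(imp v v, imp u v) \<in> \<theta>"
      using con_props(6)[OF th con_props(2)[OF th that(2)] con_props(1)[OF th]] .
    then have "imp u v \<in> P" using sat[OF pf_one[OF PX]] imp_refl by simp
    then show ?thesis using R that(1) by blast
  qed
  then show ?thesis using QX unfolding Yt_mem by blast
qed

lemma Yt_S:
  assumes th: "\<theta> \<in> Con_WHB A" and P: "P \<in> Yt \<theta>" and PQ: "(P, Q) \<in> SA A"
  shows "Q \<in> Yt \<theta>"
proof -
  have PX: "P \<in> X" and sat: "\<And>u v. u \<in> P \<Longrightarrow> (u, v) \<in> \<theta> \<Longrightarrow> v \<in> P" using P unfolding Yt_mem by blast+
  have QX: "Q \<in> X" and S: "\<And>a b. a \<in> Q \<Longrightarrow> b \<notin> Q \<Longrightarrow> cimp a b \<in> P" using SA_D[OF PQ] by blast+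
  have "v \<in> Q" if "u \<in> Q" "(u, v) \<in> \<theta>" for u v
  proof (rule ccontr)
    assume "v \<notin> Q"
    then have "cimp u v \<in> P" using S that(1) by blast
    moreover have "(cimp u v, cimp v v) \<in> \<theta>"
      using con_props(7)[OF th that(2) con_props(1)[OF th]] .
    ultimately have "z \<in> P" using sat cimp_refl by metis
    then show False using pf_zero[OF PX] by blast
  qed
  then show ?thesis using QX unfolding Yt_mem by blast
qed

end

context W begin
lemma g_con:
  assumes ph: "\<phi> \<in> Con_TBA (TA A)"
  shows "gg \<phi> \<in> Con_WHB A"
proof -
  have e: "equiv UNIV (gg \<phi>)"
  proof (rule equivI)
    show "refl (gg \<phi>)" unfolding refl_on_def gg_def using tcon(2)[OF ph tc_sg] by simp
    show "sym (gg \<phi>)" unfolding gg_def by (rule symI) (simp add: tcon(3)[OF ph])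
    show "trans (gg \<phi>)" unfolding gg_def by (rule transI) (use tcon(4)[OF ph] in simp)
  qed simp
  have "(m a c, m b d) \<in> gg \<phi> \<and> (j a c, j b d) \<in> gg \<phi> \<and> (imp a c, imp b d) \<in> gg \<phi> \<and> (cimp a c, cimp b d) \<in> gg \<phi>"
    if ab: "(a, b) \<in> gg \<phi>" and cd: "(c, d) \<in> gg \<phi>" for a b c d
  proof -
    have 1: "(sg a, sg b) \<in> \<phi>" "(sg c, sg d) \<in> \<phi>" using ab cd unfolding gg_def by simp_all
    have i: "((X - sg a) \<union> sg c, (X - sg b) \<union> sg d) \<in> \<phi>"
      using tcon(6)[OF ph tcon(7)[OF ph 1(1)] 1(2)] .
    show ?thesis unfolding gg_def mem_Collect_eq case_prod_conv sg_meet sg_join sg_imp sg_cimp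
    proof (intro conjI)
      show "(sg a \<inter> sg c, sg b \<inter> sg d) \<in> \<phi>" using tcon(5)[OF ph 1] .
      show "(sg a \<union> sg c, sg b \<union> sg d) \<in> \<phi>" using tcon(6)[OF ph 1] .
      show "(GG ((X - sg a) \<union> sg c), GG ((X - sg b) \<union> sg d)) \<in> \<phi>" using tcon(8)[OF ph i] .
      show "(X - HH ((X - sg a) \<union> sg c), X - HH ((X - sg b) \<union> sg d)) \<in> \<phi>"
        using tcon(7)[OF ph tcon(9)[OF ph i]] .
    qed
  qed
  then show ?thesis using e unfolding Con_WHB_def mem_Collect_eq by (intro conjI allI impI) simp_all
qed

end

context W begin

lemma ff_mem: "(U, V) \<in> ff \<theta> \<longleftrightarrow> U \<in> tc \<and> V \<in> tc \<and> U \<inter> Yt \<theta> = V \<inter> Yt \<theta>"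
  unfolding ff_def by simp

lemma ff_equiv: "equiv tc (ff \<theta>)"
proof (rule equivI)
  show "ff \<theta> \<subseteq> tc \<times> tc" by (auto simp: ff_mem)
  show "refl_on tc (ff \<theta>)" by (auto simp: refl_on_def ff_mem)
  show "sym (ff \<theta>)" by (auto simp: sym_def ff_mem)
  show "trans (ff \<theta>)" by (auto simp: trans_def ff_mem)
qed

lemma GY:
  assumes th: "\<theta> \<in> Con_WHB A" and eq: "U \<inter> Yt \<theta> = V \<inter> Yt \<theta>"
  shows "GG U \<inter> Yt \<theta> = GG V \<inter> Yt \<theta>"
proof -
  have *: "P \<in> GG U \<longleftrightarrow> P \<in> GG V" if P: "P \<in> Yt \<theta>" for P
  proof -
    have RY: "RA A `` {P} \<subseteq> Yt \<theta>" using Yt_R[OF th P] by (simp add: subset_iff)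
    have "RA A `` {P} \<subseteq> U \<longleftrightarrow> RA A `` {P} \<subseteq> U \<inter> Yt \<theta>" using RY by (simp add: le_inf_iff)
    also have "\<dots> \<longleftrightarrow> RA A `` {P} \<subseteq> V \<inter> Yt \<theta>" using eq by simp
    also have "\<dots> \<longleftrightarrow> RA A `` {P} \<subseteq> V" using RY by (simp add: le_inf_iff)
    finally show ?thesis by simp
  qed
  show ?thesis
  proof (rule set_eqI)
    fix P show "P \<in> GG U \<inter> Yt \<theta> \<longleftrightarrow> P \<in> GG V \<inter> Yt \<theta>"
      using *[of P] by (cases "P \<in> Yt \<theta>") simp_all
  qed
qed

lemma HY:
  assumes th: "\<theta> \<in> Con_WHB A" and eq: "U \<inter> Yt \<theta> = V \<inter> Yt \<theta>"
  shows "HH U \<inter> Yt \<theta> = HH V \<inter> Yt \<theta>"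
proof -
  have *: "P \<in> HH U \<longleftrightarrow> P \<in> HH V" if P: "P \<in> Yt \<theta>" for P
  proof -
    have RY: "SA A `` {P} \<subseteq> Yt \<theta>" using Yt_S[OF th P] by (simp add: subset_iff)
    have "SA A `` {P} \<subseteq> U \<longleftrightarrow> SA A `` {P} \<subseteq> U \<inter> Yt \<theta>" using RY by (simp add: le_inf_iff)
    also have "\<dots> \<longleftrightarrow> SA A `` {P} \<subseteq> V \<inter> Yt \<theta>" using eq by simp
    also have "\<dots> \<longleftrightarrow> SA A `` {P} \<subseteq> V" using RY by (simp add: le_inf_iff)
    finally show ?thesis by simp
  qed
  show ?thesis
  proof (rule set_eqI)
    fix P show "P \<in> HH U \<inter> Yt \<theta> \<longleftrightarrow> P \<in> HH V \<inter> Yt \<theta>"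
      using *[of P] by (cases "P \<in> Yt \<theta>") simp_all
  qed
qed

end

context W begin

lemma f_con:
  assumes th: "\<theta> \<in> Con_WHB A"
  shows "ff \<theta> \<in> Con_TBA (TA A)"
proof -
  have YX: "Yt \<theta> \<subseteq> X" by (rule Yt_sub)
  have c1: "(a \<inter> c, b \<inter> d) \<in> ff \<theta> \<and> (a \<union> c, b \<union> d) \<in> ff \<theta>"
    if "(a, b) \<in> ff \<theta>" "(c, d) \<in> ff \<theta>" for a b c d
  proof -
    have h: "a \<in> tc" "b \<in> tc" "a \<inter> Yt \<theta> = b \<inter> Yt \<theta>" "c \<in> tc" "d \<in> tc" "c \<inter> Yt \<theta> = d \<inter> Yt \<theta>"
      using that by (simp_all add: ff_mem)
    have "(a \<inter> c) \<inter> Yt \<theta> = (b \<inter> d) \<inter> Yt \<theta>" using h(3,6) by (simp add: Int_ac set_eq_iff) blast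
    moreover have "(a \<union> c) \<inter> Yt \<theta> = (b \<union> d) \<inter> Yt \<theta>" using h(3,6) by (simp add: Int_Un_distrib2)
    ultimately show ?thesis using h tc_Int tc_Un by (simp add: ff_mem)
  qed
  have c2: "(X - a, X - b) \<in> ff \<theta> \<and> (GG a, GG b) \<in> ff \<theta> \<and> (HH a, HH b) \<in> ff \<theta>"
    if "(a, b) \<in> ff \<theta>" for a b
  proof -
    have h: "a \<in> tc" "b \<in> tc" "a \<inter> Yt \<theta> = b \<inter> Yt \<theta>" using that by (simp_all add: ff_mem)
    have "(X - a) \<inter> Yt \<theta> = Yt \<theta> - (a \<inter> Yt \<theta>)" using YX by blast
    also have "\<dots> = Yt \<theta> - (b \<inter> Yt \<theta>)" using h(3) by simp
    also have "\<dots> = (X - b) \<inter> Yt \<theta>" using YX by blast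
    finally have "(X - a) \<inter> Yt \<theta> = (X - b) \<inter> Yt \<theta>" .
    then show ?thesis using h tc_diff tc_G tc_H GY[OF th h(3)] HY[OF th h(3)] by (simp add: ff_mem)
  qed
  show ?thesis unfolding Con_TBA_def mem_Collect_eq TA_simps(2-6)
    using ff_equiv c1 c2 by (intro conjI allI impI) simp_all
qed

end

context W begin
lemma sep:
  assumes th: "\<theta> \<in> Con_WHB A" and nab: "(a, m a b) \<notin> \<theta>"
  shows "\<exists>P\<in>Yt \<theta>. a \<in> P \<and> b \<notin> P"
proof -
  note cp = con_props[OF th]
  define F0 where "F0 = {x. (m a x, a) \<in> \<theta>}"
  define E where "E = {y. (j y b, b) \<in> \<theta>}"
  have F0f: "filt F0" unfolding filt_def
  proof (intro conjI allI impI)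
    show "on \<in> F0" unfolding F0_def using cp(1) by (simp add: m_comm[of a on] m_o)
  next
    fix x y assume "x \<in> F0" "le x y" then show "y \<in> F0"
      unfolding F0_def using shift[OF th _ L.order_refl] by blast
  next
    fix x y assume "x \<in> F0" "y \<in> F0"
    then have "(m (m a x) (m a y), m a a) \<in> \<theta>" unfolding F0_def using cp(4) by blast
    moreover have "m (m a x) (m a y) = m a (m x y)"
      by (metis L.inf_assoc L.inf_commute L.inf_left_commute m_idem)
    ultimately show "m x y \<in> F0" unfolding F0_def by (simp add: m_idem)
  qed
  have F0c: "clos (\<lambda>u v. (u, v) \<in> \<theta>) F0" unfolding clos_def F0_def
  proof (intro allI impI, simp)
    fix u v assume "(m a u, a) \<in> \<theta>" "(u, v) \<in> \<theta>"
    moreover have "(m a v, m a u) \<in> \<theta>" using cp(4)[OF cp(1) cp(2)[OF \<open>(u, v) \<in> \<theta>\<close>]] .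
    ultimately show "(m a v, a) \<in> \<theta>" using cp(3) by blast
  qed
  have E1: "b \<in> E" unfolding E_def using cp(1) by (simp add: j_idem)
  have E2: "x \<in> E" if "y \<in> E" "le x y" for x y
  proof -
    have "(j y b, b) \<in> \<theta>" using that(1) unfolding E_def by simp
    then have "(m (j x b) (j y b), m (j x b) b) \<in> \<theta>" using cp(4)[OF cp(1)] by blast
    moreover have "m (j x b) (j y b) = j x b" using that(2)
      by (metis L.inf_absorb1 L.sup_mono L.order_refl)
    moreover have "m (j x b) b = b" by (metis L.inf_commute m_abs j_comm)
    ultimately show ?thesis unfolding E_def by simp
  qed
  have E3: "j x y \<in> E" if "x \<in> E" "y \<in> E" for x y
  proof -
    have "(j (j x b) (j y b), j b b) \<in> \<theta>" using that unfolding E_def using cp(5) by blast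
    moreover have "j (j x b) (j y b) = j (j x y) b"
      by (metis L.sup_assoc L.sup_commute L.sup_left_commute j_idem)
    ultimately show ?thesis unfolding E_def by (simp add: j_idem)
  qed
  have disj: "F0 \<inter> E = {}"
  proof (rule ccontr)
    assume "F0 \<inter> E \<noteq> {}"
    then obtain x where x: "(m a x, a) \<in> \<theta>" "(j x b, b) \<in> \<theta>" unfolding F0_def E_def by blast
    have "(m a (j x b), m a b) \<in> \<theta>" using cp(4)[OF cp(1) x(2)] .
    moreover have "m a (j x b) = j (m a x) (m a b)" by (rule distr)
    moreover have "(j (m a x) (m a b), j a (m a b)) \<in> \<theta>" using cp(5)[OF x(1) cp(1)] .
    moreover have "j a (m a b) = a" by (rule j_abs)
    ultimately have "(m a b, a) \<in> \<theta>" using cp(2,3) by metis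
    then show False using nab cp(2) by blast
  qed
  have "\<exists>P\<in>X. F0 \<subseteq> P \<and> P \<inter> E = {} \<and> (\<forall>u v. u \<in> P \<longrightarrow> (u, v) \<in> \<theta> \<longrightarrow> v \<in> P)"
    apply (rule prime_theta[OF th F0f F0c E1 _ _ disj])
    using E2 E3 by blast+
  then obtain P where P: "P \<in> X" "F0 \<subseteq> P" "P \<inter> E = {}" "\<forall>u v. u \<in> P \<longrightarrow> (u, v) \<in> \<theta> \<longrightarrow> v \<in> P"
    by blast
  have "a \<in> F0" unfolding F0_def using cp(1) by (simp add: m_idem)
  then have "a \<in> P" using P(2) by blast
  moreover have "b \<notin> P" using E1 P(3) by blast
  moreover have "P \<in> Yt \<theta>" using P(1,4) unfolding Yt_mem by blast
  ultimately show ?thesis by blast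
qed

end

context W begin

lemma gf:
  assumes th: "\<theta> \<in> Con_WHB A"
  shows "gg (ff \<theta>) = \<theta>"
proof (rule set_eqI)
  fix p :: "'a \<times> 'a"
  obtain a b where p: "p = (a, b)" by (cases p)
  have mem: "(a, b) \<in> gg (ff \<theta>) \<longleftrightarrow> sg a \<inter> Yt \<theta> = sg b \<inter> Yt \<theta>"
    unfolding gg_def by (simp add: ff_mem tc_sg)
  note cp = con_props[OF th]
  have "sg a \<inter> Yt \<theta> = sg b \<inter> Yt \<theta> \<longleftrightarrow> (a, b) \<in> \<theta>"
  proof
    assume ab: "(a, b) \<in> \<theta>"
    show "sg a \<inter> Yt \<theta> = sg b \<inter> Yt \<theta>"
    proof (rule set_eqI)
      fix P
      show "P \<in> sg a \<inter> Yt \<theta> \<longleftrightarrow> P \<in> sg b \<inter> Yt \<theta>"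
      proof (cases "P \<in> Yt \<theta>")
        case True
        then have "\<And>u v. u \<in> P \<Longrightarrow> (u, v) \<in> \<theta> \<Longrightarrow> v \<in> P" unfolding Yt_mem by blast
        then have "a \<in> P \<longleftrightarrow> b \<in> P" using ab cp(2)[OF ab] by blast
        then show ?thesis using True by (simp add: sg_mem)
      qed simp
    qed
  next
    assume eq: "sg a \<inter> Yt \<theta> = sg b \<inter> Yt \<theta>"
    show "(a, b) \<in> \<theta>"
    proof (rule ccontr)
      assume nab: "(a, b) \<notin> \<theta>"
      have "(a, m a b) \<notin> \<theta> \<or> (b, m b a) \<notin> \<theta>"
      proof (rule ccontr)
        assume "\<not> ?thesis"
        then have "(a, m a b) \<in> \<theta>" "(b, m b a) \<in> \<theta>" by simp_all
        then have "(a, b) \<in> \<theta>" using cp(2,3) m_comm by metis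
        then show False using nab by simp
      qed
      then show False
      proof
        assume "(a, m a b) \<notin> \<theta>"
        then obtain P where "P \<in> Yt \<theta>" "a \<in> P" "b \<notin> P" using sep[OF th] by blast
        moreover have "P \<in> X" using \<open>P \<in> Yt \<theta>\<close> Yt_sub by blast
        ultimately have "P \<in> sg a \<inter> Yt \<theta>" "P \<notin> sg b \<inter> Yt \<theta>" by (simp_all add: sg_mem)
        then show False using eq by simp
      next
        assume "(b, m b a) \<notin> \<theta>"
        then obtain P where "P \<in> Yt \<theta>" "b \<in> P" "a \<notin> P" using sep[OF th] by blast
        moreover have "P \<in> X" using \<open>P \<in> Yt \<theta>\<close> Yt_sub by blast
        ultimately have "P \<in> sg b \<inter> Yt \<theta>" "P \<notin> sg a \<inter> Yt \<theta>" by (simp_all add: sg_mem)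
        then show False using eq by simp
      qed
    qed
  qed
  then show "p \<in> gg (ff \<theta>) \<longleftrightarrow> p \<in> \<theta>" using mem p by simp
qed

lemma key1:
  assumes ph: "\<phi> \<in> Con_TBA (TA A)" and WX: "(U, X) \<in> \<phi>"
  shows "Yt (gg \<phi>) \<subseteq> U"
proof
  fix P assume PY: "P \<in> Yt (gg \<phi>)"
  then have PX: "P \<in> X" and sat: "\<And>u v. u \<in> P \<Longrightarrow> (u, v) \<in> gg \<phi> \<Longrightarrow> v \<in> P"
    unfolding Yt_mem by blast+
  have Utc: "U \<in> tc" using tcon(1)[OF ph WX] by blast
  have UX: "U \<subseteq> X" by (rule tc_sub[OF Utc])
  show "P \<in> U"
  proof (rule ccontr)
    assume "P \<notin> U"
    then have "P \<in> X - U" using PX by simp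
    moreover have "openin T (X - U)" using tc_diff[OF Utc] tc_iff by blast
    ultimately obtain c d where cd: "P \<in> sg c" "P \<notin> sg d" "sg c - sg d \<subseteq> X - U"
      using basic_nbhd by blast
    define W' where "W' = (X - sg c) \<union> sg d"
    have W'tc: "W' \<in> tc" unfolding W'_def by (intro tc_Un tc_nsg tc_sg)
    have "U \<subseteq> W'"
    proof
      fix Q assume Q: "Q \<in> U"
      then have "Q \<in> X" using UX by blast
      moreover have "\<not> (Q \<in> sg c \<and> Q \<notin> sg d)" using cd(3) Q by blast
      ultimately show "Q \<in> W'" unfolding W'_def by blast
    qed
    have "(W' \<union> U, W' \<union> X) \<in> \<phi>" using tcon(6)[OF ph tcon(2)[OF ph W'tc] WX] .
    moreover have "W' \<union> U = W'" using \<open>U \<subseteq> W'\<close> by blast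
    moreover have "W' \<union> X = X" unfolding W'_def using sg_sub by blast
    ultimately have W'X: "(W', X) \<in> \<phi>" by simp
    have "(sg c \<inter> W', sg c \<inter> X) \<in> \<phi>" using tcon(5)[OF ph tcon(2)[OF ph tc_sg] W'X] .
    moreover have "sg c \<inter> W' = sg (m c d)" unfolding W'_def sg_meet using sg_sub by blast
    moreover have "sg c \<inter> X = sg c" using sg_sub by blast
    ultimately have "(sg c, sg (m c d)) \<in> \<phi>" using tcon(3)[OF ph] by simp
    then have "(c, m c d) \<in> gg \<phi>" unfolding gg_def by simp
    moreover have "c \<in> P" using cd(1) by (simp add: sg_mem)
    ultimately have "m c d \<in> P" using sat by blast
    then have "d \<in> P" using pf_meet[OF PX] by blast
    then show False using cd(2) PX by (simp add: sg_mem)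
  qed
qed

lemma fin_inter:
  assumes ph: "\<phi> \<in> Con_TBA (TA A)"
  shows "finite F \<Longrightarrow> (\<forall>Ob\<in>F. (X - Ob, X) \<in> \<phi>) \<Longrightarrow> (X - \<Union>F, X) \<in> \<phi>"
proof (induction F rule: finite_induct)
  case empty then show ?case using tcon(2)[OF ph tc_X] by simp
next
  case (insert Ob F)
  then have a: "(X - Ob, X) \<in> \<phi>" and b: "(X - \<Union>F, X) \<in> \<phi>" by simp_all
  have "((X - Ob) \<inter> (X - \<Union>F), X \<inter> X) \<in> \<phi>" using tcon(5)[OF ph a b] .
  moreover have "(X - Ob) \<inter> (X - \<Union>F) = X - \<Union>(insert Ob F)" by blast
  ultimately show ?case by simp
qed

lemma key2:
  assumes ph: "\<phi> \<in> Con_TBA (TA A)" and Utc: "U \<in> tc" and YU: "Yt (gg \<phi>) \<subseteq> U"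
  shows "(U, X) \<in> \<phi>"
proof -
  let ?V = "X - U"
  have UX: "U \<subseteq> X" by (rule tc_sub[OF Utc])
  have Vc: "closedin T ?V" using tc_diff[OF Utc] tc_iff by blast
  have cV: "compactin T ?V" using closedin_compact_space[OF compact Vc] .
  define \<U> where "\<U> = {Ob. \<exists>u v. Ob = sg u - sg v \<and> (sg u, sg v) \<in> \<phi>}"
  have "\<forall>W\<in>\<U>. openin T W" unfolding \<U>_def using open_basic by blast
  moreover have "?V \<subseteq> \<Union>\<U>"
  proof
    fix Q assume Q: "Q \<in> ?V"
    then have QX: "Q \<in> X" and "Q \<notin> Yt (gg \<phi>)" using YU by blast+
    then obtain u v where uv: "u \<in> Q" "(u, v) \<in> gg \<phi>" "v \<notin> Q" unfolding Yt_mem by blast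
    then have "Q \<in> sg u - sg v" using QX by (simp add: sg_mem)
    moreover have "sg u - sg v \<in> \<U>" using uv(2) unfolding \<U>_def gg_def by blast
    ultimately show "Q \<in> \<Union>\<U>" by (rule UnionI[rotated])
  qed
  ultimately have "(\<forall>W\<in>\<U>. openin T W) \<and> ?V \<subseteq> \<Union>\<U>" by (rule conjI)
  moreover have "\<forall>\<U>. (\<forall>W\<in>\<U>. openin T W) \<and> ?V \<subseteq> \<Union>\<U> \<longrightarrow> (\<exists>\<F>. finite \<F> \<and> \<F> \<subseteq> \<U> \<and> ?V \<subseteq> \<Union>\<F>)"
    using cV unfolding compactin_def by (rule conjunct2)
  ultimately have "\<exists>\<F>. finite \<F> \<and> \<F> \<subseteq> \<U> \<and> ?V \<subseteq> \<Union>\<F>" by (rule mp[OF spec[of _ \<U>], rotated])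
  then obtain \<F> where F: "finite \<F>" "\<F> \<subseteq> \<U>" "?V \<subseteq> \<Union>\<F>" by (elim exE conjE)
  have "(X - Ob, X) \<in> \<phi>" if Ob: "Ob \<in> \<F>" for Ob
  proof -
    obtain u v where uv: "Ob = sg u - sg v" "(sg u, sg v) \<in> \<phi>" using Ob F(2) unfolding \<U>_def by blast
    have "((X - sg u) \<union> sg v, (X - sg v) \<union> sg v) \<in> \<phi>"
      using tcon(6)[OF ph tcon(7)[OF ph uv(2)] tcon(2)[OF ph tc_sg]] .
    moreover have "(X - sg v) \<union> sg v = X" using sg_sub by blast
    moreover have "X - Ob = (X - sg u) \<union> sg v" unfolding uv(1) using sg_sub by blast
    ultimately show ?thesis by simp
  qed
  then have Z: "(X - \<Union>\<F>, X) \<in> \<phi>" using fin_inter[OF ph F(1)] by blast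
  have "(U \<union> (X - \<Union>\<F>), U \<union> X) \<in> \<phi>" using tcon(6)[OF ph tcon(2)[OF ph Utc] Z] .
  moreover have "U \<union> (X - \<Union>\<F>) = U" using F(3) by blast
  moreover have "U \<union> X = X" using UX by blast
  ultimately show ?thesis by simp
qed

lemma fg:
  assumes ph: "\<phi> \<in> Con_TBA (TA A)"
  shows "ff (gg \<phi>) = \<phi>"
proof (rule set_eqI)
  fix p :: "'a set set \<times> 'a set set"
  obtain U V where p: "p = (U, V)" by (cases p)
  let ?Y = "Yt (gg \<phi>)"
  have YX: "?Y \<subseteq> X" by (rule Yt_sub)
  define D where "D = ((X - U) \<union> V) \<inter> ((X - V) \<union> U)"
  have "(U, V) \<in> \<phi> \<longleftrightarrow> U \<in> tc \<and> V \<in> tc \<and> U \<inter> ?Y = V \<inter> ?Y"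
  proof
    assume UV: "(U, V) \<in> \<phi>"
    have tcs: "U \<in> tc" "V \<in> tc" using tcon(1)[OF ph UV] by blast+
    have UX: "U \<subseteq> X" "V \<subseteq> X" using tcs tc_sub by blast+
    have "((X - U) \<union> V, (X - V) \<union> V) \<in> \<phi>"
      using tcon(6)[OF ph tcon(7)[OF ph UV] tcon(2)[OF ph tcs(2)]] .
    moreover have "(X - V) \<union> V = X" using UX by blast
    ultimately have e1: "((X - U) \<union> V, X) \<in> \<phi>" by simp
    have "((X - V) \<union> U, (X - U) \<union> U) \<in> \<phi>"
      using tcon(6)[OF ph tcon(7)[OF ph tcon(3)[OF ph UV]] tcon(2)[OF ph tcs(1)]] .
    moreover have "(X - U) \<union> U = X" using UX by blast
    ultimately have e2: "((X - V) \<union> U, X) \<in> \<phi>" by simp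
    have "(D, X \<inter> X) \<in> \<phi>" unfolding D_def using tcon(5)[OF ph e1 e2] .
    then have "?Y \<subseteq> D" using key1[OF ph] by simp
    then have "U \<inter> ?Y = V \<inter> ?Y" unfolding D_def using YX by blast
    then show "U \<in> tc \<and> V \<in> tc \<and> U \<inter> ?Y = V \<inter> ?Y" using tcs by simp
  next
    assume h: "U \<in> tc \<and> V \<in> tc \<and> U \<inter> ?Y = V \<inter> ?Y"
    then have tcs: "U \<in> tc" "V \<in> tc" and eq: "U \<inter> ?Y = V \<inter> ?Y" by simp_all
    have UX: "U \<subseteq> X" "V \<subseteq> X" using tcs tc_sub by blast+
    have Dtc: "D \<in> tc" unfolding D_def using tcs by (intro tc_Int tc_Un tc_diff)
    have "?Y \<subseteq> D" unfolding D_def using YX eq by blast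
    then have DX: "(D, X) \<in> \<phi>" using key2[OF ph Dtc] by simp
    have "(U \<inter> D, U \<inter> X) \<in> \<phi>" using tcon(5)[OF ph tcon(2)[OF ph tcs(1)] DX] .
    moreover have "U \<inter> D = U \<inter> V" "U \<inter> X = U" unfolding D_def using UX by blast+
    ultimately have 1: "(U \<inter> V, U) \<in> \<phi>" by simp
    have "(V \<inter> D, V \<inter> X) \<in> \<phi>" using tcon(5)[OF ph tcon(2)[OF ph tcs(2)] DX] .
    moreover have "V \<inter> D = U \<inter> V" "V \<inter> X = V" unfolding D_def using UX by blast+
    ultimately have 2: "(U \<inter> V, V) \<in> \<phi>" by simp
    show "(U, V) \<in> \<phi>" using tcon(4)[OF ph tcon(3)[OF ph 1] 2] .
  qed
  then show "p \<in> ff (gg \<phi>) \<longleftrightarrow> p \<in> \<phi>" unfolding p by (simp add: ff_mem)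
qed

end


lemma iso_generic:
  fixes f :: "('c \<times> 'c) set \<Rightarrow> ('d \<times> 'd) set" and g :: "('d \<times> 'd) set \<Rightarrow> ('c \<times> 'c) set"
  assumes fL: "\<And>x. x \<in> L \<Longrightarrow> f x \<in> M" and gM: "\<And>y. y \<in> M \<Longrightarrow> g y \<in> L"
    and gf: "\<And>x. x \<in> L \<Longrightarrow> g (f x) = x" and fg: "\<And>y. y \<in> M \<Longrightarrow> f (g y) = y"
    and fmono: "\<And>x x'. x \<in> L \<Longrightarrow> x' \<in> L \<Longrightarrow> x \<subseteq> x' \<Longrightarrow> f x \<subseteq> f x'"
    and gmono: "\<And>y y'. y \<in> M \<Longrightarrow> y' \<in> M \<Longrightarrow> y \<subseteq> y' \<Longrightarrow> g y \<subseteq> g y'"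
    and LI: "\<And>S. S \<subseteq> L \<Longrightarrow> S \<noteq> {} \<Longrightarrow> \<Inter>S \<in> L" and Lt: "tL \<in> L" "\<And>x. x \<in> L \<Longrightarrow> x \<subseteq> tL"
    and MI: "\<And>S. S \<subseteq> M \<Longrightarrow> S \<noteq> {} \<Longrightarrow> \<Inter>S \<in> M" and Mt: "tM \<in> M" "\<And>y. y \<in> M \<Longrightarrow> y \<subseteq> tM"
  shows "lattice_iso L M f"
proof -
  have bij: "bij_betw f L M"
    by (rule bij_betw_byWitness[where f' = g]) (use gf fg fL gM in auto)
  have Lint: "x \<inter> y \<in> L" if "x \<in> L" "y \<in> L" for x y
    using LI[of "{x, y}"] that by simp
  have Mint: "x \<inter> y \<in> M" if "x \<in> M" "y \<in> M" for x y
    using MI[of "{x, y}"] that by simp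
  have joinL: "con_join L x y \<in> L \<and> x \<union> y \<subseteq> con_join L x y \<and> (\<forall>\<phi>\<in>L. x \<union> y \<subseteq> \<phi> \<longrightarrow> con_join L x y \<subseteq> \<phi>)"
    if "x \<in> L" "y \<in> L" for x y
  proof -
    have ne: "{\<phi> \<in> L. x \<union> y \<subseteq> \<phi>} \<noteq> {}" using Lt that by blast
    have "\<Inter>{\<phi> \<in> L. x \<union> y \<subseteq> \<phi>} \<in> L" by (rule LI) (use ne in auto)
    then show ?thesis unfolding con_join_def by blast
  qed
  have joinM: "con_join M x y \<in> M \<and> x \<union> y \<subseteq> con_join M x y \<and> (\<forall>\<phi>\<in>M. x \<union> y \<subseteq> \<phi> \<longrightarrow> con_join M x y \<subseteq> \<phi>)"
    if "x \<in> M" "y \<in> M" for x y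
  proof -
    have ne: "{\<phi> \<in> M. x \<union> y \<subseteq> \<phi>} \<noteq> {}" using Mt that by blast
    have "\<Inter>{\<phi> \<in> M. x \<union> y \<subseteq> \<phi>} \<in> M" by (rule MI) (use ne in auto)
    then show ?thesis unfolding con_join_def by blast
  qed
  have meet: "f (x \<inter> y) = f x \<inter> f y" if xy: "x \<in> L" "y \<in> L" for x y
  proof
    show "f (x \<inter> y) \<subseteq> f x \<inter> f y" using fmono[OF Lint[OF xy]] xy by blast
    have m: "f x \<inter> f y \<in> M" using Mint fL xy by blast
    have "g (f x \<inter> f y) \<subseteq> g (f x)" "g (f x \<inter> f y) \<subseteq> g (f y)"
      using gmono[OF m] fL xy by blast+
    then have "g (f x \<inter> f y) \<subseteq> x \<inter> y" using gf xy by blast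
    then have "f (g (f x \<inter> f y)) \<subseteq> f (x \<inter> y)" using fmono gM[OF m] Lint[OF xy] by blast
    then show "f x \<inter> f y \<subseteq> f (x \<inter> y)" using fg[OF m] by simp
  qed
  have join: "f (con_join L x y) = con_join M (f x) (f y)" if xy: "x \<in> L" "y \<in> L" for x y
  proof
    let ?J = "con_join L x y" and ?K = "con_join M (f x) (f y)"
    have J: "?J \<in> L" "x \<union> y \<subseteq> ?J" "\<And>\<phi>. \<phi> \<in> L \<Longrightarrow> x \<union> y \<subseteq> \<phi> \<Longrightarrow> ?J \<subseteq> \<phi>" using joinL[OF xy] by blast+
    have fxy: "f x \<in> M" "f y \<in> M" using fL xy by blast+
    have K: "?K \<in> M" "f x \<union> f y \<subseteq> ?K" "\<And>\<phi>. \<phi> \<in> M \<Longrightarrow> f x \<union> f y \<subseteq> \<phi> \<Longrightarrow> ?K \<subseteq> \<phi>"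
      using joinM[OF fxy] by blast+
    have "f x \<subseteq> f ?J" "f y \<subseteq> f ?J" using fmono J(1,2) xy by blast+
    then show "?K \<subseteq> f ?J" using K(3) fL[OF J(1)] by blast
    have "g (f x) \<subseteq> g ?K" "g (f y) \<subseteq> g ?K" using gmono K(1,2) fxy by blast+
    then have "x \<union> y \<subseteq> g ?K" using gf xy by simp
    then have "?J \<subseteq> g ?K" using J(3) gM[OF K(1)] by blast
    then have "f ?J \<subseteq> f (g ?K)" using fmono J(1) gM[OF K(1)] by blast
    then show "f ?J \<subseteq> ?K" using fg[OF K(1)] by simp
  qed
  show ?thesis unfolding lattice_iso_def using bij meet join by blast
qed

context W begin

lemma con_Inter:
  assumes S: "S \<subseteq> Con_WHB A" "S \<noteq> {}"
  shows "\<Inter>S \<in> Con_WHB A"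
proof -
  have cp: "\<And>\<theta>. \<theta> \<in> S \<Longrightarrow> \<theta> \<in> Con_WHB A" using S(1) by blast
  have e: "equiv UNIV (\<Inter>S)"
  proof (rule equivI)
    show "refl (\<Inter>S)" unfolding refl_on_def using con_props(1)[OF cp] by blast
    show "sym (\<Inter>S)" by (rule symI) (use con_props(2)[OF cp] in blast)
    show "trans (\<Inter>S)" by (rule transI) (use con_props(3)[OF cp] in blast)
  qed simp
  have c4: "(m a c, m b d) \<in> \<Inter>S" if "(a, b) \<in> \<Inter>S" "(c, d) \<in> \<Inter>S" for a b c d
    using con_props(4)[OF cp] that by blast
  have c5: "(j a c, j b d) \<in> \<Inter>S" if "(a, b) \<in> \<Inter>S" "(c, d) \<in> \<Inter>S" for a b c d
    using con_props(5)[OF cp] that by blast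
  have c6: "(imp a c, imp b d) \<in> \<Inter>S" if "(a, b) \<in> \<Inter>S" "(c, d) \<in> \<Inter>S" for a b c d
    using con_props(6)[OF cp] that by blast
  have c7: "(cimp a c, cimp b d) \<in> \<Inter>S" if "(a, b) \<in> \<Inter>S" "(c, d) \<in> \<Inter>S" for a b c d
    using con_props(7)[OF cp] that by blast
  show ?thesis unfolding Con_WHB_def mem_Collect_eq
    using e c4 c5 c6 c7 by simp
qed

lemma con_top: "UNIV \<in> Con_WHB A"
  unfolding Con_WHB_def equiv_def refl_on_def sym_def trans_def by simp

lemma tcon_Inter:
  assumes S: "S \<subseteq> Con_TBA (TA A)" "S \<noteq> {}"
  shows "\<Inter>S \<in> Con_TBA (TA A)"
proof -
  have cp: "\<And>\<phi>. \<phi> \<in> S \<Longrightarrow> \<phi> \<in> Con_TBA (TA A)" using S(1) by blast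
  obtain \<phi>0 where p0: "\<phi>0 \<in> S" using S(2) by blast
  have e: "equiv tc (\<Inter>S)"
  proof (rule equivI)
    show "\<Inter>S \<subseteq> tc \<times> tc"
    proof
      fix p assume "p \<in> \<Inter>S"
      then have "p \<in> \<phi>0" using p0 by blast
      then show "p \<in> tc \<times> tc" using tcon(1)[OF cp[OF p0]] by (cases p) simp
    qed
    show "refl_on tc (\<Inter>S)" unfolding refl_on_def
    proof
      fix U assume "U \<in> tc" then show "(U, U) \<in> \<Inter>S" using tcon(2)[OF cp] by blast
    qed
    show "sym (\<Inter>S)" by (rule symI) (use tcon(3)[OF cp] in blast)
    show "trans (\<Inter>S)" by (rule transI) (use tcon(4)[OF cp] in blast)
  qed
  have c5: "(a \<inter> c, b \<inter> d) \<in> \<Inter>S" if "(a, b) \<in> \<Inter>S" "(c, d) \<in> \<Inter>S" for a b c d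
    using tcon(5)[OF cp] that by blast
  have c6: "(a \<union> c, b \<union> d) \<in> \<Inter>S" if "(a, b) \<in> \<Inter>S" "(c, d) \<in> \<Inter>S" for a b c d
    using tcon(6)[OF cp] that by blast
  have c7: "(X - a, X - b) \<in> \<Inter>S" "(GG a, GG b) \<in> \<Inter>S" "(HH a, HH b) \<in> \<Inter>S"
    if "(a, b) \<in> \<Inter>S" for a b
    using tcon(7-9)[OF cp] that by blast+
  show ?thesis unfolding Con_TBA_def mem_Collect_eq TA_simps(2-6)
    using e c5 c6 c7 by simp
qed

lemma tcon_top: "tc \<times> tc \<in> Con_TBA (TA A)"
  unfolding Con_TBA_def mem_Collect_eq TA_simps(2-6)
proof (intro conjI allI impI)
  show "equiv tc (tc \<times> tc)" unfolding equiv_def refl_on_def sym_def trans_def by blast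
qed (auto intro: tc_Int tc_Un tc_diff tc_G tc_H)

lemma ff_mono: "\<theta> \<subseteq> \<theta>' \<Longrightarrow> ff \<theta> \<subseteq> ff \<theta>'"
proof -
  assume s: "\<theta> \<subseteq> \<theta>'"
  have "Yt \<theta>' \<subseteq> Yt \<theta>" using s unfolding Yt_def by blast
  then show "ff \<theta> \<subseteq> ff \<theta>'" unfolding ff_def by blast
qed

lemma gg_mono: "\<phi> \<subseteq> \<phi>' \<Longrightarrow> gg \<phi> \<subseteq> gg \<phi>'"
  unfolding gg_def by blast

lemma main: "lattice_iso (Con_WHB A) (Con_TBA (TA A)) ff"
  by (rule iso_generic[where g = gg and tL = UNIV and tM = "tc \<times> tc"])
     (auto simp: f_con g_con gf fg ff_mono gg_mono con_Inter con_top tcon_Inter tcon_top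
           dest: tcon(1))

end

theorem theorem6p6:
  fixes A :: "'a whb"
  assumes "WHB_algebra A"
  shows "\<exists>f. lattice_iso (Con_WHB A) (Con_TBA (TA A)) f"
proof -
  interpret W A using assms by unfold_locales
  show ?thesis using main by blast
qed


end
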